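(* Let $K\ge1$, $L\ge K$, $m\ge1$. Let $\mathcal G_{\mathrm{train}}$ be a finite set of training pairs $(G,\Gamma^K(G))$ with $M$ total reachable nodes, containing the pairs $(H^{(0)}_K,\Gamma^K(H^{(0)}_K))$ and $(P^{(0)}_1(1),\Gamma^K(P^{(0)}_1(1)))$. Let $0<\eta<\frac{1}{2M(mL+mK+K)}$ and $0\le\epsilon<\eta$, and consider $L$-layer MinAgg GNNs $\mathcal A_\theta$ with $m$-layer MLPs. Then the minimum of $\mathcal L_{\mathrm{reg}}(\theta)=\mathcal L_{\mathrm{MAE}}(\mathcal G_{\mathrm{train}},\mathcal A_\theta)+\eta\|\theta\|_0$ over all $\theta$ equals $\eta(mL+mK+K)$. Moreover, if $\mathcal L_{\mathrm{reg}}(\theta)\le\eta(mL+mK+K)+\epsilon$, then: $\theta$ has exactly $mL+mK+K$ nonzero entries; $\mathcal A_\theta$ has exactly $K$ message passing layers $\ell_1<\dots<\ell_K$, each of them edge-dependent; every $f^{\mathrm{up},(\ell)}$ is non-constant; all bias vectors $b^{\mathrm{up},(\ell)}_j,b^{\mathrm{agg},(\ell)}_j$ are zero; $\|W^{\mathrm{up},(\ell)}_j\|_0=1$ for all $j\in[m]$, $\ell\in[L]$; and for each message passing layer $\ell_k$, $\|W^{\mathrm{agg},(\ell_k)}_1\|_0=2$ with both nonzero entries in the same row, and $\|W^{\mathrm{agg},(\ell_k)}_j\|_0=1$ for $2\le j\le m$.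
   Context: Attributed graphs: $G=(V,E,X_{\mathrm v},X_{\mathrm e})$, $V$ finite, undirected edges, nonnegative edge weights and nonnegative node features; self-loop of weight $0$ at each node; $\mathcal N(v)=\{v\}\cup\{u:\{u,v\}\in E\}$. A large constant $\beta>0$ encodes "infinite distance". $x_v(H)$ is the feature of $v$ in $H$. $\Gamma$ sends $G$ to the graph with the same vertices, edges and weights and features $x'_v=\min\{x_u+x_{(u,v)}:u\in\mathcal N(v)\}$; $\Gamma^K$ is its $K$-fold iterate. For a source $s$, $\mathrm d^{(t)}(s,v)$ is the minimal weight of a walk from $s$ to $v$ with at most $t$ edges ($\beta$ if none); a $t$-step BF instance is a graph with features $x_v=\mathrm d^{(t)}(s,v)$ for a designated source $s$. $P^{(t)}_k(a_1,\dots,a_k)$: path $v_0,\dots,v_k$, edge $\{v_{i-1},v_i\}$ of weight $a_i$, features $x_{v_i}=\mathrm d^{(t)}(v_0,v_i)$. $H^{(0)}_K$: vertices $v_0,\dots,v_K,u_0,\dots,u_K$; edges $\{v_{i-1},v_i\},\{u_{i-1},u_i\}$ (weight $0$) and $\{u_{i-1},v_i\},\{v_{i-1},u_i\}$ (weight $1$), $i\in[K]$; features $x_{v_0}=0$, $x_w=\beta$ otherwise. MinAgg GNN $\mathcal A_\theta$ ($L$ layers, hidden dimension $d$, $m$-layer MLPs): for $\ell\in[L]$, $m$-layer ReLU MLPs $f^{\mathrm{agg},(\ell)}:\mathbb R^{d_{\ell-1}+1}\to\mathbb R^d$ with parameters $(W^{\mathrm{agg},(\ell)}_j,b^{\mathrm{agg},(\ell)}_j)_{j\in[m]}$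 and $f^{\mathrm{up},(\ell)}:\mathbb R^{d+d_{\ell-1}}\to\mathbb R^{d_\ell}$ with parameters $(W^{\mathrm{up},(\ell)}_j,b^{\mathrm{up},(\ell)}_j)_{j\in[m]}$, each computing $x^{(j)}=\sigma(W_jx^{(j-1)}+b_j)$ with componentwise ReLU $\sigma$; $d_0=d_L=1$, $d_\ell=d$ otherwise. $h^{(0)}_v=x_v$, $h^{(\ell)}_v=f^{\mathrm{up},(\ell)}\big(\min_{u\in\mathcal N(v)}f^{\mathrm{agg},(\ell)}(h^{(\ell-1)}_u\oplus x_{(u,v)})\oplus h^{(\ell-1)}_v\big)$ (coordinatewise min, $\oplus$ concatenation). $\theta$ is the collection of all these parameters and $\|\theta\|_0$ the number of nonzero entries; $\|W\|_0$ is the number of nonzero entries of a matrix. Dependence: a function $f$ on $\mathbb R^n_{\ge0}$ depends on a set $S$ of coordinates if some $x\ne y$ in $\mathbb R^n_{\ge0}$ agreeing outside $S$ have $f(x)\ne f(y)$; "constant" means constant on $\mathbb R^n_{\ge0}$. Node component of $f^{\mathrm{agg},(\ell)}$: first $d_{\ell-1}$ input coordinates; edge component: the last. Layer $\ell$ is message passing if $f^{\mathrm{agg},(\ell)}$ depends on its node component, edge-dependent message passing if it also depends on its edge component. Loss: a training set $\mathcal G_{\mathrm{train}}$ is a finite set of pairs $(G,\Gamma^K(G))$ with $G$ a BF instance; $V^*(G)=\{v: x_v(\Gamma^K(G))\ne\beta\}$ (nodes reachable from the source within the target), $M=\sum_{(G,\cdot)\in\mathcal G_{\mathrm{train}}}|V^*(G)|$,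 and $\mathcal L_{\mathrm{MAE}}(\mathcal G_{\mathrm{train}},\mathcal A_\theta)=\frac1M\sum_{G}\sum_{v\in V^*(G)}|x_v(\Gamma^K(G))-h^{(L)}_v(G)|$. *)

theory Defs
  imports "HOL-Analysis.Analysis"
begin

text \<open>Every node additionally carries an
  implicit self-loop of weight 0 (see nbhd and ef).\<close>

record wgraph =
  verts :: "nat set"
  adj   :: "nat \<Rightarrow> nat \<Rightarrow> bool"
  wt    :: "nat \<Rightarrow> nat \<Rightarrow> real"
  feat  :: "nat \<Rightarrow> real"

definition wf_graph :: "wgraph \<Rightarrow> bool" where
  "wf_graph G \<longleftrightarrow> finite (verts G)
     \<and> (\<forall>u v. adj G u v \<longrightarrow> u \<in> verts G \<and> v \<in> verts G)
     \<and> (\<forall>u v. adj G u v \<longrightarrow> adj G v u)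
     \<and> (\<forall>v. \<not> adj G v v)
     \<and> (\<forall>u v. adj G u v \<longrightarrow> wt G u v = wt G v u \<and> wt G u v \<ge> 0)
     \<and> (\<forall>v\<in>verts G. feat G v \<ge> 0)"

definition nbhd :: "wgraph \<Rightarrow> nat \<Rightarrow> nat set" where
  "nbhd G v = insert v {u. adj G u v}"

definition ef :: "wgraph \<Rightarrow> nat \<Rightarrow> nat \<Rightarrow> real" where
  "ef G u v = (if u = v then 0 else wt G u v)"

definition Gamma :: "wgraph \<Rightarrow> wgraph" where
  "Gamma G = G\<lparr>feat := (\<lambda>v. Min ((\<lambda>u. feat G u + ef G u v) ` nbhd G v))\<rparr>"

definition is_walk :: "wgraph \<Rightarrow> nat list \<Rightarrow> bool" where
  "is_walk G xs \<longleftrightarrow> xs \<noteq> [] \<and> set xs \<subseteq> verts G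
     \<and> (\<forall>i. Suc i < length xs \<longrightarrow> adj G (xs ! i) (xs ! Suc i))"

definition walk_wt :: "wgraph \<Rightarrow> nat list \<Rightarrow> real" where
  "walk_wt G xs = (\<Sum>i < length xs - 1. wt G (xs ! i) (xs ! Suc i))"

text \<open>d^(t)(s,v): minimal weight of a walk from s to v with at most t edges
  (i.e. at most t+1 vertices); beta if there is none.\<close>
definition tdist :: "real \<Rightarrow> wgraph \<Rightarrow> nat \<Rightarrow> nat \<Rightarrow> nat \<Rightarrow> real" where
  "tdist \<beta> G t s v =
     (if \<exists>xs. is_walk G xs \<and> hd xs = s \<and> last xs = v \<and> length xs \<le> Suc t
      then Min {walk_wt G xs | xs. is_walk G xs \<and> hd xs = s \<and> last xs = v \<and> length xs \<le> Suc t}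
      else \<beta>)"

definition bf_instance :: "real \<Rightarrow> wgraph \<Rightarrow> bool" where
  "bf_instance \<beta> G \<longleftrightarrow> wf_graph G \<and>
     (\<exists>s\<in>verts G. \<exists>t. \<forall>v\<in>verts G. feat G v = tdist \<beta> G t s v)"

definition graph_iso :: "wgraph \<Rightarrow> wgraph \<Rightarrow> bool" where
  "graph_iso G H \<longleftrightarrow> (\<exists>f. bij_betw f (verts G) (verts H)
     \<and> (\<forall>u\<in>verts G. \<forall>v\<in>verts G. adj G u v \<longleftrightarrow> adj H (f u) (f v))
     \<and> (\<forall>u\<in>verts G. \<forall>v\<in>verts G. adj G u v \<longrightarrow> wt G u v = wt H (f u) (f v))
     \<and> (\<forall>v\<in>verts G. feat G v = feat H (f v)))"

text \<open>P^(t)_k(a_1,...,a_k): path v_0,...,v_k (vertex v_i is the number i), edge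
  {v_(i-1),v_i} of weight a_i, features d^(t)(v_0,v_i).\<close>
definition path_skel :: "real list \<Rightarrow> wgraph" where
  "path_skel as = \<lparr> verts = {0..length as},
     adj = (\<lambda>a b. a \<le> length as \<and> b \<le> length as \<and> (a = Suc b \<or> b = Suc a)),
     wt = (\<lambda>a b. as ! (min a b)),
     feat = (\<lambda>_. 0) \<rparr>"

definition path_graph :: "real \<Rightarrow> nat \<Rightarrow> real list \<Rightarrow> wgraph" where
  "path_graph \<beta> t as = (path_skel as)\<lparr>feat := (\<lambda>v. tdist \<beta> (path_skel as) t 0 v)\<rparr>"

text \<open>H^(0)_K: v_i is the number i and u_i is the number K+1+i (0 \<le> i \<le> K).\<close>
definition H_idx :: "nat \<Rightarrow> nat \<Rightarrow> nat" where
  "H_idx K a = (if a \<le> K then a else a - Suc K)"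

definition H_graph :: "nat \<Rightarrow> real \<Rightarrow> wgraph" where
  "H_graph K \<beta> = \<lparr> verts = {0..2*K+1},
     adj = (\<lambda>a b. a \<le> 2*K+1 \<and> b \<le> 2*K+1 \<and> (H_idx K a = Suc (H_idx K b) \<or> H_idx K b = Suc (H_idx K a))),
     wt = (\<lambda>a b. if (a \<le> K \<longleftrightarrow> b \<le> K) then 0 else 1),
     feat = (\<lambda>a. if a = 0 then 0 else \<beta>) \<rparr>"

text \<open>Vectors are functions nat \<Rightarrow> real (only the first n coordinates are meaningful,
  the others are kept 0); matrices are functions nat \<Rightarrow> nat \<Rightarrow> real, of which only the
  r x c block is used.\<close>

definition relu_layer :: "nat \<Rightarrow> nat \<Rightarrow> (nat \<Rightarrow> nat \<Rightarrow> real) \<Rightarrow> (nat \<Rightarrow> real) \<Rightarrow> (nat \<Rightarrow> real) \<Rightarrow> nat \<Rightarrow> real" where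
  "relu_layer r c W b x = (\<lambda>i. if i < r then max 0 ((\<Sum>k<c. W i k * x k) + b i) else 0)"

text \<open>MLP with layer widths w 0 (input), w 1, ..., w j; W j and b j are the
  parameters of layer j.\<close>
primrec mlp :: "(nat \<Rightarrow> nat) \<Rightarrow> (nat \<Rightarrow> nat \<Rightarrow> nat \<Rightarrow> real) \<Rightarrow> (nat \<Rightarrow> nat \<Rightarrow> real) \<Rightarrow> nat \<Rightarrow> (nat \<Rightarrow> real) \<Rightarrow> nat \<Rightarrow> real" where
  "mlp w W b 0 x = x"
| "mlp w W b (Suc j) x = relu_layer (w (Suc j)) (w j) (W (Suc j)) (b (Suc j)) (mlp w W b j x)"

definition vconcat :: "nat \<Rightarrow> (nat \<Rightarrow> real) \<Rightarrow> (nat \<Rightarrow> real) \<Rightarrow> nat \<Rightarrow> real" where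
  "vconcat n x y = (\<lambda>i. if i < n then x i else y (i - n))"

text \<open>Parameters theta: Wagg l j is W^(agg,(l))_j (entry i k = row i, column k),
  bagg l j is b^(agg,(l))_j, and similarly for the update MLPs.\<close>
record gnn_params =
  Wagg :: "nat \<Rightarrow> nat \<Rightarrow> nat \<Rightarrow> nat \<Rightarrow> real"
  bagg :: "nat \<Rightarrow> nat \<Rightarrow> nat \<Rightarrow> real"
  Wup  :: "nat \<Rightarrow> nat \<Rightarrow> nat \<Rightarrow> nat \<Rightarrow> real"
  bup  :: "nat \<Rightarrow> nat \<Rightarrow> nat \<Rightarrow> real"

definition dimh :: "nat \<Rightarrow> nat \<Rightarrow> nat \<Rightarrow> nat" where
  "dimh L d l = (if l = 0 \<or> l = L then 1 else d)"

definition wagg :: "nat \<Rightarrow> nat \<Rightarrow> nat \<Rightarrow> nat \<Rightarrow> nat" where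
  "wagg L d l j = (if j = 0 then dimh L d (l - 1) + 1 else d)"

definition wup :: "nat \<Rightarrow> nat \<Rightarrow> nat \<Rightarrow> nat \<Rightarrow> nat \<Rightarrow> nat" where
  "wup L d m l j = (if j = 0 then d + dimh L d (l - 1) else if j = m then dimh L d l else d)"

definition f_agg :: "nat \<Rightarrow> nat \<Rightarrow> nat \<Rightarrow> gnn_params \<Rightarrow> nat \<Rightarrow> (nat \<Rightarrow> real) \<Rightarrow> nat \<Rightarrow> real" where
  "f_agg L d m \<theta> l = mlp (wagg L d l) (Wagg \<theta> l) (bagg \<theta> l) m"

definition f_up :: "nat \<Rightarrow> nat \<Rightarrow> nat \<Rightarrow> gnn_params \<Rightarrow> nat \<Rightarrow> (nat \<Rightarrow> real) \<Rightarrow> nat \<Rightarrow> real" where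
  "f_up L d m \<theta> l = mlp (wup L d m l) (Wup \<theta> l) (bup \<theta> l) m"

primrec gnn_h :: "nat \<Rightarrow> nat \<Rightarrow> nat \<Rightarrow> gnn_params \<Rightarrow> wgraph \<Rightarrow> nat \<Rightarrow> nat \<Rightarrow> nat \<Rightarrow> real" where
  "gnn_h L d m \<theta> G 0 v = (\<lambda>i. if i = 0 then feat G v else 0)"
| "gnn_h L d m \<theta> G (Suc l) v =
     f_up L d m \<theta> (Suc l)
       (vconcat d
          (\<lambda>i. Min ((\<lambda>u. f_agg L d m \<theta> (Suc l)
                            (vconcat (dimh L d l) (gnn_h L d m \<theta> G l u)
                                     (\<lambda>k. if k = 0 then ef G u v else 0)) i) ` nbhd G v))
          (gnn_h L d m \<theta> G l v))"

definition gnn_out :: "nat \<Rightarrow> nat \<Rightarrow> nat \<Rightarrow> gnn_params \<Rightarrow> wgraph \<Rightarrow> nat \<Rightarrow> real" where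
  "gnn_out L d m \<theta> G v = gnn_h L d m \<theta> G L v 0"

definition nnz_mat :: "nat \<Rightarrow> nat \<Rightarrow> (nat \<Rightarrow> nat \<Rightarrow> real) \<Rightarrow> nat" where
  "nnz_mat r c W = card {(i, k). i < r \<and> k < c \<and> W i k \<noteq> 0}"

definition nnz_vec :: "nat \<Rightarrow> (nat \<Rightarrow> real) \<Rightarrow> nat" where
  "nnz_vec r b = card {i. i < r \<and> b i \<noteq> 0}"

definition norm0 :: "nat \<Rightarrow> nat \<Rightarrow> nat \<Rightarrow> gnn_params \<Rightarrow> nat" where
  "norm0 L d m \<theta> = (\<Sum>l\<in>{1..L}. \<Sum>j\<in>{1..m}.
       nnz_mat (wagg L d l j) (wagg L d l (j - 1)) (Wagg \<theta> l j)
     + nnz_vec (wagg L d l j) (bagg \<theta> l j)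
     + nnz_mat (wup L d m l j) (wup L d m l (j - 1)) (Wup \<theta> l j)
     + nnz_vec (wup L d m l j) (bup \<theta> l j))"

definition nonneg_vec :: "nat \<Rightarrow> (nat \<Rightarrow> real) \<Rightarrow> bool" where
  "nonneg_vec n x \<longleftrightarrow> (\<forall>i<n. x i \<ge> 0) \<and> (\<forall>i\<ge>n. x i = 0)"

definition depends_on :: "nat \<Rightarrow> ((nat \<Rightarrow> real) \<Rightarrow> (nat \<Rightarrow> real)) \<Rightarrow> nat set \<Rightarrow> bool" where
  "depends_on n f S \<longleftrightarrow> (\<exists>x y. nonneg_vec n x \<and> nonneg_vec n y \<and> x \<noteq> y
       \<and> (\<forall>i<n. i \<notin> S \<longrightarrow> x i = y i) \<and> f x \<noteq> f y)"

definition constant_on_nonneg :: "nat \<Rightarrow> ((nat \<Rightarrow> real) \<Rightarrow> (nat \<Rightarrow> real)) \<Rightarrow> bool" where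
  "constant_on_nonneg n f \<longleftrightarrow> (\<forall>x y. nonneg_vec n x \<and> nonneg_vec n y \<longrightarrow> f x = f y)"

text \<open>Layer l is message passing iff f_agg^(l) depends on its node component
  (the first d_(l-1) coordinates); edge-dependent iff it moreover depends on its
  edge component (the last coordinate).\<close>
definition msg_passing :: "nat \<Rightarrow> nat \<Rightarrow> nat \<Rightarrow> gnn_params \<Rightarrow> nat \<Rightarrow> bool" where
  "msg_passing L d m \<theta> l \<longleftrightarrow>
     depends_on (dimh L d (l - 1) + 1) (f_agg L d m \<theta> l) {..<dimh L d (l - 1)}"

definition edge_dep_msg_passing :: "nat \<Rightarrow> nat \<Rightarrow> nat \<Rightarrow> gnn_params \<Rightarrow> nat \<Rightarrow> bool" where
  "edge_dep_msg_passing L d m \<theta> l \<longleftrightarrow> msg_passing L d m \<theta> l \<and>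
     depends_on (dimh L d (l - 1) + 1) (f_agg L d m \<theta> l) {dimh L d (l - 1)}"

definition train_set :: "real \<Rightarrow> nat \<Rightarrow> (wgraph \<times> wgraph) set \<Rightarrow> bool" where
  "train_set \<beta> K T \<longleftrightarrow> finite T \<and>
     (\<forall>(G, G')\<in>T. bf_instance \<beta> G \<and> G' = (Gamma ^^ K) G)"

definition Vstar :: "real \<Rightarrow> wgraph \<Rightarrow> wgraph \<Rightarrow> nat set" where
  "Vstar \<beta> G G' = {v\<in>verts G. feat G' v \<noteq> \<beta>}"

definition Mtot :: "real \<Rightarrow> (wgraph \<times> wgraph) set \<Rightarrow> nat" where
  "Mtot \<beta> T = (\<Sum>(G, G')\<in>T. card (Vstar \<beta> G G'))"

definition loss_MAE :: "real \<Rightarrow> (wgraph \<times> wgraph) set \<Rightarrow> nat \<Rightarrow> nat \<Rightarrow> nat \<Rightarrow> gnn_params \<Rightarrow> real" where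
  "loss_MAE \<beta> T L d m \<theta> = (1 / real (Mtot \<beta> T)) *
     (\<Sum>(G, G')\<in>T. \<Sum>v\<in>Vstar \<beta> G G'. \<bar>feat G' v - gnn_out L d m \<theta> G v\<bar>)"

definition loss_reg :: "real \<Rightarrow> real \<Rightarrow> (wgraph \<times> wgraph) set \<Rightarrow> nat \<Rightarrow> nat \<Rightarrow> nat \<Rightarrow> gnn_params \<Rightarrow> real" where
  "loss_reg \<eta> \<beta> T L d m \<theta> = loss_MAE \<beta> T L d m \<theta> + \<eta> * real (norm0 L d m \<theta>)"

end

theory Submission imports Defs begin

lemma mlp_eq_mono:
  "mlp w W b j x = mlp w W b j y \<Longrightarrow> j \<le> n \<Longrightarrow> mlp w W b n x = mlp w W b n y"
  by (induction n) (auto simp: le_Suc_eq)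

lemma mlp_nonneg: "0 < j \<Longrightarrow> mlp w W b j x i \<ge> 0"
  by (cases j) (auto simp: relu_layer_def)

lemma mlp_zero: "0 < j \<Longrightarrow> w j \<le> i \<Longrightarrow> mlp w W b j x i = 0"
  by (cases j) (auto simp: relu_layer_def)

lemma finite_nnz: "finite {(i, k). i < (r::nat) \<and> k < (c::nat) \<and> P i k}"
  by (rule finite_subset[of _ "{..<r} \<times> {..<c}"]) (auto intro: finite_cartesian_product)

lemma nnz_mat_0: "nnz_mat r c W = 0 \<Longrightarrow> i < r \<Longrightarrow> k < c \<Longrightarrow> W i k = 0"
  unfolding nnz_mat_def using finite_nnz[of r c "\<lambda>i k. W i k \<noteq> 0"] by auto

lemma nnz_vec_0: "nnz_vec r b = 0 \<Longrightarrow> i < r \<Longrightarrow> b i = 0"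
  unfolding nnz_vec_def by auto

lemma relu_layer_cong:
  assumes "\<And>i. i < r \<Longrightarrow> (\<Sum>k<c. W i k * x k) = (\<Sum>k<c. W i k * y k)"
  shows "relu_layer r c W b x = relu_layer r c W b y"
  using assms by (auto simp: relu_layer_def)

lemma mlp_zero_layer:
  assumes "nnz_mat (w j) (w (j - 1)) (W j) = 0" "1 \<le> j" "j \<le> n"
  shows "mlp w W b n x = mlp w W b n y"
proof -
  obtain j' where j: "j = Suc j'" using assms(2) by (cases j) auto
  have "mlp w W b j x = mlp w W b j y"
    unfolding j mlp.simps
  proof (rule relu_layer_cong)
    fix i assume i: "i < w (Suc j')"
    have "(\<Sum>k<w j'. W (Suc j') i k * mlp w W b j' x k) = 0"
      using nnz_mat_0[OF assms(1)] i by (intro sum.neutral) (auto simp: j)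
    moreover have "(\<Sum>k<w j'. W (Suc j') i k * mlp w W b j' y k) = 0"
      using nnz_mat_0[OF assms(1)] i by (intro sum.neutral) (auto simp: j)
    ultimately show "(\<Sum>k<w j'. W (Suc j') i k * mlp w W b j' x k) = (\<Sum>k<w j'. W (Suc j') i k * mlp w W b j' y k)"
      by simp
  qed
  thus ?thesis using mlp_eq_mono assms(3) by blast
qed

lemma nnz_le1_col:
  assumes "nnz_mat r c W \<le> 1"
  shows "\<exists>k0. \<forall>i k. i < r \<and> k < c \<and> W i k \<noteq> 0 \<longrightarrow> k = k0"
proof -
  let ?S = "{(i, k). i < r \<and> k < c \<and> W i k \<noteq> 0}"
  have fin: "finite ?S" by (rule finite_nnz)
  have all: "\<forall>a1\<in>?S. \<forall>a2\<in>?S. a1 = a2"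
    using assms card_le_Suc0_iff_eq[OF fin] unfolding nnz_mat_def by auto
  show ?thesis
  proof (cases "?S = {}")
    case True thus ?thesis by auto
  next
    case False
    then obtain s where s: "s \<in> ?S" by blast
    show ?thesis
      by (rule exI[of _ "snd s"]) (use all s in auto)
  qed
qed

lemma mlp_one_col:
  assumes "nnz_mat (w (Suc j)) (w j) (W (Suc j)) \<le> 1"
  shows "\<exists>k0. \<forall>x y. mlp w W b j x k0 = mlp w W b j y k0 \<longrightarrow> mlp w W b (Suc j) x = mlp w W b (Suc j) y"
proof -
  obtain k0 where k0: "\<forall>i k. i < w (Suc j) \<and> k < w j \<and> W (Suc j) i k \<noteq> 0 \<longrightarrow> k = k0"
    using nnz_le1_col[OF assms] by blast
  show ?thesis
  proof (intro exI allI impI)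
    fix x y assume xy: "mlp w W b j x k0 = mlp w W b j y k0"
    show "mlp w W b (Suc j) x = mlp w W b (Suc j) y"
      unfolding mlp.simps
    proof (rule relu_layer_cong)
      fix i assume i: "i < w (Suc j)"
      show "(\<Sum>k<w j. W (Suc j) i k * mlp w W b j x k) = (\<Sum>k<w j. W (Suc j) i k * mlp w W b j y k)"
      proof (rule sum.cong)
        fix k assume "k \<in> {..<w j}"
        thus "W (Suc j) i k * mlp w W b j x k = W (Suc j) i k * mlp w W b j y k"
          using k0 i xy by (cases "k = k0") auto
      qed simp
    qed
  qed
qed

section \<open>Gamma and isomorphisms\<close>

lemma Gamma_pow_struct:
  "verts ((Gamma^^j) G) = verts G \<and> adj ((Gamma^^j) G) = adj G \<and> wt ((Gamma^^j) G) = wt G"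
  by (induction j) (auto simp: Gamma_def)

lemma nbhd_Gamma_pow: "nbhd ((Gamma^^j) G) = nbhd G"
  by (simp add: nbhd_def Gamma_pow_struct fun_eq_iff)

lemma ef_Gamma_pow: "ef ((Gamma^^j) G) = ef G"
  by (simp add: ef_def Gamma_pow_struct fun_eq_iff)

lemma feat_Gamma_Suc:
  "feat ((Gamma^^Suc j) G) v = Min ((\<lambda>u. feat ((Gamma^^j) G) u + ef G u v) ` nbhd G v)"
  by (simp add: Gamma_def nbhd_Gamma_pow ef_Gamma_pow)

definition isof :: "(nat \<Rightarrow> nat) \<Rightarrow> wgraph \<Rightarrow> wgraph \<Rightarrow> bool" where
  "isof f G H \<longleftrightarrow> bij_betw f (verts G) (verts H)
     \<and> (\<forall>u\<in>verts G. \<forall>v\<in>verts G. adj G u v \<longleftrightarrow> adj H (f u) (f v))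
     \<and> (\<forall>u\<in>verts G. \<forall>v\<in>verts G. adj G u v \<longrightarrow> wt G u v = wt H (f u) (f v))
     \<and> (\<forall>v\<in>verts G. feat G v = feat H (f v))"

lemma graph_iso_isof: "graph_iso G H \<Longrightarrow> \<exists>f. isof f G H"
  unfolding graph_iso_def isof_def by blast

definition adj_in :: "wgraph \<Rightarrow> bool" where
  "adj_in G \<longleftrightarrow> (\<forall>u v. adj G u v \<longrightarrow> u \<in> verts G \<and> v \<in> verts G)"

lemma nbhd_iso:
  assumes "isof f G H" "adj_in G" "adj_in H" "x \<in> verts G"
  shows "nbhd H (f x) = f ` nbhd G x"
proof
  have bij: "bij_betw f (verts G) (verts H)" using assms(1) by (simp add: isof_def)
  show "f ` nbhd G x \<subseteq> nbhd H (f x)"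
  proof
    fix w assume "w \<in> f ` nbhd G x"
    then obtain u where u: "u \<in> nbhd G x" "w = f u" by blast
    show "w \<in> nbhd H (f x)"
    proof (cases "u = x")
      case True thus ?thesis using u by (simp add: nbhd_def)
    next
      case False
      hence a: "adj G u x" using u by (simp add: nbhd_def)
      hence "u \<in> verts G" using assms(2) by (simp add: adj_in_def)
      hence "adj H (f u) (f x)" using a assms(1,4) by (simp add: isof_def)
      thus ?thesis using u by (simp add: nbhd_def)
    qed
  qed
  show "nbhd H (f x) \<subseteq> f ` nbhd G x"
  proof
    fix w assume w: "w \<in> nbhd H (f x)"
    show "w \<in> f ` nbhd G x"
    proof (cases "w = f x")
      case True thus ?thesis by (auto simp: nbhd_def)
    next
      case False
      hence a: "adj H w (f x)" using w by (auto simp: nbhd_def)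
      hence "w \<in> verts H" using assms(3) by (auto simp: adj_in_def)
      then obtain u where u: "u \<in> verts G" "w = f u"
        using bij_betw_imp_surj_on[OF bij] by auto
      hence "adj G u x" using a assms(1,4) by (auto simp: isof_def)
      thus ?thesis using u by (auto simp: nbhd_def)
    qed
  qed
qed

lemma nbhd_in_verts: "adj_in G \<Longrightarrow> x \<in> verts G \<Longrightarrow> u \<in> nbhd G x \<Longrightarrow> u \<in> verts G"
  by (auto simp: adj_in_def nbhd_def)

lemma ef_iso:
  assumes "isof f G H" "adj_in G" "x \<in> verts G" "u \<in> nbhd G x"
  shows "ef H (f u) (f x) = ef G u x"
proof (cases "u = x")
  case True thus ?thesis by (simp add: ef_def)
next
  case False
  hence a: "adj G u x" using assms(4) by (auto simp: nbhd_def)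
  hence uv: "u \<in> verts G" using assms(2) by (auto simp: adj_in_def)
  have "f u \<noteq> f x" using False assms(1,3) uv unfolding isof_def bij_betw_def inj_on_def by blast
  thus ?thesis using False a uv assms(1,3) by (auto simp: ef_def isof_def)
qed

lemma gnn_iso:
  assumes "isof f G H" "adj_in G" "adj_in H"
  shows "x \<in> verts G \<Longrightarrow> gnn_h L d m \<theta> G l x = gnn_h L d m \<theta> H l (f x)"
proof (induction l arbitrary: x)
  case 0 thus ?case using assms(1) by (auto simp: isof_def)
next
  case (Suc l)
  have img: "(\<lambda>u. f_agg L d m \<theta> (Suc l) (vconcat (dimh L d l) (gnn_h L d m \<theta> H l u)
                 (\<lambda>k. if k = 0 then ef H u (f x) else 0)) i) ` nbhd H (f x)
        = (\<lambda>u. f_agg L d m \<theta> (Suc l) (vconcat (dimh L d l) (gnn_h L d m \<theta> G l u)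
                 (\<lambda>k. if k = 0 then ef G u x else 0)) i) ` nbhd G x" for i
    unfolding nbhd_iso[OF assms(1-3) Suc.prems] image_image
  proof (rule image_cong[OF refl])
    fix u assume u: "u \<in> nbhd G x"
    have e: "ef H (f u) (f x) = ef G u x" by (rule ef_iso[OF assms(1,2) Suc.prems u])
    have g: "gnn_h L d m \<theta> G l u = gnn_h L d m \<theta> H l (f u)"
      by (rule Suc.IH[OF nbhd_in_verts[OF assms(2) Suc.prems u]])
    show "f_agg L d m \<theta> (Suc l) (vconcat (dimh L d l) (gnn_h L d m \<theta> H l (f u))
                 (\<lambda>k. if k = 0 then ef H (f u) (f x) else 0)) i =
          f_agg L d m \<theta> (Suc l) (vconcat (dimh L d l) (gnn_h L d m \<theta> G l u)
                 (\<lambda>k. if k = 0 then ef G u x else 0)) i"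
      by (simp only: e g)
  qed
  show ?case by (simp only: gnn_h.simps img Suc.IH[OF Suc.prems])
qed

lemma Gamma_iso:
  assumes "isof f G H" "adj_in G" "adj_in H"
  shows "x \<in> verts G \<Longrightarrow> feat ((Gamma^^j) G) x = feat ((Gamma^^j) H) (f x)"
proof (induction j arbitrary: x)
  case 0 thus ?case using assms(1) by (auto simp: isof_def)
next
  case (Suc j)
  have img: "(\<lambda>u. feat ((Gamma^^j) H) u + ef H u (f x)) ` nbhd H (f x)
        = (\<lambda>u. feat ((Gamma^^j) G) u + ef G u x) ` nbhd G x"
    unfolding nbhd_iso[OF assms(1-3) Suc.prems] image_image
  proof (rule image_cong[OF refl])
    fix u assume u: "u \<in> nbhd G x"
    have e: "ef H (f u) (f x) = ef G u x" by (rule ef_iso[OF assms(1,2) Suc.prems u])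
    have g: "feat ((Gamma^^j) G) u = feat ((Gamma^^j) H) (f u)"
      by (rule Suc.IH[OF nbhd_in_verts[OF assms(2) Suc.prems u]])
    show "feat ((Gamma^^j) H) (f u) + ef H (f u) (f x) = feat ((Gamma^^j) G) u + ef G u x"
      by (simp only: e g)
  qed
  show ?case by (simp only: feat_Gamma_Suc img)
qed

section \<open>The graph H\<close>

definition sig :: "nat \<Rightarrow> nat \<Rightarrow> nat" where
  "sig K a = (if a \<le> K then a + Suc K else a - Suc K)"

lemma H_simps:
  "verts (H_graph K \<beta>) = {0..2*K+1}"
  "adj (H_graph K \<beta>) a b \<longleftrightarrow> a \<le> 2*K+1 \<and> b \<le> 2*K+1 \<and> (H_idx K a = Suc (H_idx K b) \<or> H_idx K b = Suc (H_idx K a))"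
  "wt (H_graph K \<beta>) a b = (if (a \<le> K \<longleftrightarrow> b \<le> K) then 0 else 1)"
  "feat (H_graph K \<beta>) a = (if a = 0 then 0 else \<beta>)"
  by (simp_all add: H_graph_def)

lemma sig_props:
  "a \<le> 2*K+1 \<Longrightarrow> sig K a \<le> 2*K+1 \<and> sig K (sig K a) = a \<and> H_idx K (sig K a) = H_idx K a
     \<and> (sig K a \<le> K \<longleftrightarrow> \<not> a \<le> K) \<and> H_idx K a \<le> K"
  by (auto simp: sig_def H_idx_def)

lemma adj_in_H: "adj_in (H_graph K \<beta>)"
  by (auto simp: adj_in_def H_simps)

lemma nbhd_H_le:
  "u \<in> nbhd (H_graph K \<beta>) a \<Longrightarrow> a \<le> 2*K+1 \<Longrightarrow> u \<le> 2*K+1 \<and> H_idx K a \<le> Suc (H_idx K u)"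
  by (auto simp: nbhd_def H_simps)

lemma adj_H_sig:
  "a \<le> 2*K+1 \<Longrightarrow> b \<le> 2*K+1 \<Longrightarrow> adj (H_graph K \<beta>) (sig K a) (sig K b) = adj (H_graph K \<beta>) a b"
  using sig_props[of a K] sig_props[of b K] by (simp add: H_simps)

lemma sig_inj: "a \<le> 2*K+1 \<Longrightarrow> b \<le> 2*K+1 \<Longrightarrow> sig K a = sig K b \<longleftrightarrow> a = b"
  using sig_props[of a K] sig_props[of b K] by metis

lemma ef_H_sig:
  "a \<le> 2*K+1 \<Longrightarrow> b \<le> 2*K+1 \<Longrightarrow> ef (H_graph K \<beta>) (sig K a) (sig K b) = ef (H_graph K \<beta>) a b"
  using sig_props[of a K] sig_props[of b K] sig_inj[of a K b] by (auto simp add: H_simps ef_def)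

lemma ef_H_nonneg: "ef (H_graph K \<beta>) u v \<ge> 0"
  by (simp add: ef_def H_simps)

lemma nbhd_H_sig:
  assumes "a \<le> 2*K+1"
  shows "nbhd (H_graph K \<beta>) (sig K a) = sig K ` nbhd (H_graph K \<beta>) a"
proof
  show "sig K ` nbhd (H_graph K \<beta>) a \<subseteq> nbhd (H_graph K \<beta>) (sig K a)"
  proof
    fix w assume "w \<in> sig K ` nbhd (H_graph K \<beta>) a"
    then obtain u where u: "u \<in> nbhd (H_graph K \<beta>) a" "w = sig K u" by blast
    have "u \<le> 2*K+1" using nbhd_H_le[OF u(1) assms] by simp
    thus "w \<in> nbhd (H_graph K \<beta>) (sig K a)"
      using u adj_H_sig[OF _ assms, of u \<beta>] by (auto simp: nbhd_def)
  qed
  show "nbhd (H_graph K \<beta>) (sig K a) \<subseteq> sig K ` nbhd (H_graph K \<beta>) a"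
  proof
    fix w assume w: "w \<in> nbhd (H_graph K \<beta>) (sig K a)"
    have sa: "sig K a \<le> 2*K+1" using sig_props[OF assms] by simp
    have wl: "w \<le> 2*K+1" using nbhd_H_le[OF w sa] by simp
    have ww: "w = sig K (sig K w)" using sig_props[OF wl] by simp
    have swl: "sig K w \<le> 2*K+1" using sig_props[OF wl] by simp
    have "sig K w \<in> nbhd (H_graph K \<beta>) a"
    proof (cases "w = sig K a")
      case True thus ?thesis using sig_props[OF assms] by (simp add: nbhd_def)
    next
      case False
      hence "adj (H_graph K \<beta>) w (sig K a)" using w by (simp add: nbhd_def)
      hence "adj (H_graph K \<beta>) (sig K (sig K w)) (sig K a)" using ww by simp
      thus ?thesis using adj_H_sig[OF swl assms] by (simp add: nbhd_def)
    qed
    thus "w \<in> sig K ` nbhd (H_graph K \<beta>) a" using ww by blast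
  qed
qed

lemma adj_H_twin:
  "a \<le> 2*K+1 \<Longrightarrow> adj (H_graph K \<beta>) u (sig K a) = adj (H_graph K \<beta>) u a"
  using sig_props[of a K] by (simp add: H_simps)

lemma nbhd_H_twin:
  "a \<le> 2*K+1 \<Longrightarrow> nbhd (H_graph K \<beta>) (sig K a) = insert (sig K a) {u. adj (H_graph K \<beta>) u a}"
  using adj_H_twin[of a K \<beta>] by (simp add: nbhd_def)

lemma finite_nbhd_H: "finite (nbhd (H_graph K \<beta>) a)"
  by (rule finite_subset[of _ "insert a {0..2*K+1}"]) (auto simp: nbhd_def H_simps)

lemma Gamma_H:
  assumes "\<beta> \<ge> 1"
  shows "\<forall>a \<le> 2*K+1. (a \<le> K \<longrightarrow> 0 \<le> feat ((Gamma^^j) (H_graph K \<beta>)) a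
             \<and> (a \<le> j \<longrightarrow> feat ((Gamma^^j) (H_graph K \<beta>)) a = 0))
     \<and> (K < a \<longrightarrow> 1 \<le> feat ((Gamma^^j) (H_graph K \<beta>)) a
             \<and> (1 \<le> H_idx K a \<and> H_idx K a \<le> j \<longrightarrow> feat ((Gamma^^j) (H_graph K \<beta>)) a = 1))"
proof (induction j)
  case 0 show ?case using assms by (auto simp: H_simps H_idx_def)
next
  case (Suc j)
  define H where "H = H_graph K \<beta>"
  define F where "F = feat ((Gamma^^j) H)"
  have IH: "\<And>a. a \<le> 2*K+1 \<Longrightarrow> (a \<le> K \<longrightarrow> 0 \<le> F a \<and> (a \<le> j \<longrightarrow> F a = 0))
     \<and> (K < a \<longrightarrow> 1 \<le> F a \<and> (1 \<le> H_idx K a \<and> H_idx K a \<le> j \<longrightarrow> F a = 1))"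
    using Suc.IH unfolding F_def H_def by blast
  have eq: "feat ((Gamma^^Suc j) H) a = Min ((\<lambda>u. F u + ef H u a) ` nbhd H a)" for a
    unfolding F_def by (rule feat_Gamma_Suc)
  have "\<forall>a \<le> 2*K+1. (a \<le> K \<longrightarrow> 0 \<le> feat ((Gamma^^Suc j) H) a
             \<and> (a \<le> Suc j \<longrightarrow> feat ((Gamma^^Suc j) H) a = 0))
     \<and> (K < a \<longrightarrow> 1 \<le> feat ((Gamma^^Suc j) H) a
             \<and> (1 \<le> H_idx K a \<and> H_idx K a \<le> Suc j \<longrightarrow> feat ((Gamma^^Suc j) H) a = 1))"
  proof (intro allI impI conjI)
    fix a :: nat assume a: "a \<le> 2*K+1"
    let ?A = "(\<lambda>u. F u + ef H u a) ` nbhd H a"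
    have fin: "finite ?A" unfolding H_def by (intro finite_imageI finite_nbhd_H)
    have ne: "?A \<noteq> {}" by (auto simp: nbhd_def)
    have lb: "(if a \<le> K then 0 else 1) \<le> F u + ef H u a" if u: "u \<in> nbhd H a" for u
    proof -
      have ul: "u \<le> 2*K+1" using nbhd_H_le[OF u[unfolded H_def] a] by simp
      have e0: "ef H u a \<ge> 0" unfolding H_def by (rule ef_H_nonneg)
      show ?thesis
      proof (cases "a \<le> K")
        case True
        have "F u \<ge> 0" using IH[OF ul] by (cases "u \<le> K") auto
        thus ?thesis using True e0 by simp
      next
        case False
        show ?thesis
        proof (cases "u \<le> K")
          case True
          hence "u \<noteq> a" using False by auto
          hence "ef H u a = 1" using True False by (simp add: ef_def H_def H_simps)
          moreover have "F u \<ge> 0" using IH[OF ul] True by auto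
          ultimately show ?thesis using False by simp
        next
          case uK: False
          have "F u \<ge> 1" using IH[OF ul] uK by auto
          thus ?thesis using False e0 by simp
        qed
      qed
    qed
    have minlb: "(if a \<le> K then 0 else 1) \<le> Min ?A"
      using lb fin ne by (auto simp: Min_ge_iff)
    show "a \<le> K \<Longrightarrow> 0 \<le> feat ((Gamma^^Suc j) H) a" by (simp only: eq) (use minlb in simp)
    show "K < a \<Longrightarrow> 1 \<le> feat ((Gamma^^Suc j) H) a" by (simp only: eq) (use minlb in simp)
    show "feat ((Gamma^^Suc j) H) a = 0" if aK: "a \<le> K" and aj: "a \<le> Suc j"
    proof -
      have "0 \<in> ?A"
      proof (cases "a = 0")
        case True
        have "F 0 = 0" using IH[of 0] by simp
        thus ?thesis using True by (auto simp: nbhd_def ef_def intro!: image_eqI[of _ _ 0])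
      next
        case False
        have adj: "adj H (a - 1) a" using False aK by (auto simp: H_def H_simps H_idx_def)
        have "F (a - 1) = 0" using IH[of "a - 1"] aK aj by simp
        moreover have "ef H (a - 1) a = 0" using False aK by (simp add: ef_def H_def H_simps)
        ultimately show ?thesis using adj by (auto simp: nbhd_def intro!: image_eqI[of _ _ "a - 1"])
      qed
      hence "Min ?A \<le> 0" by (rule Min_le[OF fin])
      thus ?thesis by (simp only: eq) (use minlb aK in simp)
    qed
    show "feat ((Gamma^^Suc j) H) a = 1" if aK: "K < a" and ai: "1 \<le> H_idx K a \<and> H_idx K a \<le> Suc j"
    proof -
      define u where "u = a - Suc K - 1"
      have idx: "H_idx K a = a - Suc K" using aK by (simp add: H_idx_def)
      have uK: "u \<le> K" "u \<le> j" using ai idx a unfolding u_def by auto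
      have adj: "adj H u a" using aK ai a idx uK unfolding u_def by (auto simp: H_def H_simps H_idx_def)
      have "F u = 0" using IH[of u] uK by simp
      moreover have "ef H u a = 1" using uK aK by (simp add: ef_def H_def H_simps)
      ultimately have "1 \<in> ?A" using adj by (auto simp: nbhd_def intro!: image_eqI[of _ _ u])
      hence "Min ?A \<le> 1" by (rule Min_le[OF fin])
      thus ?thesis by (simp only: eq) (use minlb aK in simp)
    qed
  qed
  thus ?case unfolding H_def .
qed

section \<open>Dependence notions and the symmetry argument\<close>

definition dep_c :: "nat \<Rightarrow> ((nat \<Rightarrow> real) \<Rightarrow> (nat \<Rightarrow> real)) \<Rightarrow> nat \<Rightarrow> nat set \<Rightarrow> bool" where
  "dep_c n f c S \<longleftrightarrow> (\<exists>x y. nonneg_vec n x \<and> nonneg_vec n y \<and> (\<forall>i<n. i \<notin> S \<longrightarrow> x i = y i) \<and> f x c \<noteq> f y c)"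

definition jointc :: "nat \<Rightarrow> nat \<Rightarrow> nat \<Rightarrow> gnn_params \<Rightarrow> nat \<Rightarrow> nat \<Rightarrow> bool" where
  "jointc L d m \<theta> l c \<longleftrightarrow> dep_c (dimh L d (l - 1) + 1) (f_agg L d m \<theta> l) c {..<dimh L d (l - 1)}
       \<and> dep_c (dimh L d (l - 1) + 1) (f_agg L d m \<theta> l) c {dimh L d (l - 1)}"

definition Jset :: "nat \<Rightarrow> nat \<Rightarrow> nat \<Rightarrow> gnn_params \<Rightarrow> nat \<Rightarrow> nat set" where
  "Jset L d m \<theta> l = {c. c < d \<and> jointc L d m \<theta> l c}"

definition ej :: "nat \<Rightarrow> nat \<Rightarrow> nat \<Rightarrow> gnn_params \<Rightarrow> nat \<Rightarrow> bool" where
  "ej L d m \<theta> l \<longleftrightarrow> depends_on (wup L d m l 0) (f_up L d m \<theta> l) (Jset L d m \<theta> l)"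

definition AGG :: "nat \<Rightarrow> nat \<Rightarrow> nat \<Rightarrow> gnn_params \<Rightarrow> wgraph \<Rightarrow> nat \<Rightarrow> nat \<Rightarrow> nat \<Rightarrow> real" where
  "AGG L d m \<theta> G l a i = Min ((\<lambda>u. f_agg L d m \<theta> (Suc l)
       (vconcat (dimh L d l) (gnn_h L d m \<theta> G l u) (\<lambda>k. if k = 0 then ef G u a else 0)) i) ` nbhd G a)"

lemma gnn_h_Suc':
  "gnn_h L d m \<theta> G (Suc l) a = f_up L d m \<theta> (Suc l) (vconcat d (AGG L d m \<theta> G l a) (gnn_h L d m \<theta> G l a))"
  by (simp add: AGG_def[abs_def])

lemma gnn_nonneg:
  assumes "m \<ge> 1" "\<forall>u. feat G u \<ge> 0"
  shows "nonneg_vec (dimh L d l) (gnn_h L d m \<theta> G l u)"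
proof (cases l)
  case 0 thus ?thesis using assms by (auto simp: nonneg_vec_def dimh_def)
next
  case (Suc l')
  have w: "wup L d m (Suc l') m = dimh L d (Suc l')" using assms(1) by (simp add: wup_def)
  show ?thesis unfolding Suc gnn_h.simps f_up_def nonneg_vec_def
    using mlp_nonneg[of m] mlp_zero[of m] assms(1) w by auto
qed

lemma vconc_nonneg:
  assumes "nonneg_vec p z" "e \<ge> 0"
  shows "nonneg_vec (p + 1) (vconcat p z (\<lambda>k. if k = 0 then e else 0))"
  using assms by (auto simp: nonneg_vec_def vconcat_def)

lemma f_agg_nonneg: "m \<ge> 1 \<Longrightarrow> f_agg L d m \<theta> l x i \<ge> 0"
  unfolding f_agg_def by (rule mlp_nonneg) simp

context
  fixes L d m :: nat and \<theta> :: gnn_params and K :: nat and \<beta> :: real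
  assumes m1: "m \<ge> 1" and bpos: "\<beta> > 0"
begin

lemma H_feat_nonneg: "\<forall>u. feat (H_graph K \<beta>) u \<ge> 0"
  using bpos by (simp add: H_simps)

lemma hH_nonneg: "nonneg_vec (dimh L d l) (gnn_h L d m \<theta> (H_graph K \<beta>) l u)"
  by (rule gnn_nonneg[OF m1 H_feat_nonneg])

lemma AGG_H_nonneg: "AGG L d m \<theta> (H_graph K \<beta>) l a i \<ge> 0"
  unfolding AGG_def using finite_nbhd_H[of K \<beta> a] f_agg_nonneg[OF m1]
  by (subst Min_ge_iff) (auto simp: nbhd_def)

lemma IN_H_nonneg:
  "nonneg_vec (wup L d m (Suc l) 0) (vconcat d (AGG L d m \<theta> (H_graph K \<beta>) l a) (gnn_h L d m \<theta> (H_graph K \<beta>) l a))"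
proof -
  have p: "nonneg_vec (dimh L d l) (gnn_h L d m \<theta> (H_graph K \<beta>) l a)" by (rule hH_nonneg)
  have w: "wup L d m (Suc l) 0 = d + dimh L d l" by (simp add: wup_def)
  show ?thesis unfolding w nonneg_vec_def vconcat_def
    using AGG_H_nonneg p unfolding nonneg_vec_def by auto
qed

abbreviation FF :: "nat \<Rightarrow> nat \<Rightarrow> (nat \<Rightarrow> real) \<Rightarrow> real \<Rightarrow> real" where
  "FF l c z e \<equiv> f_agg L d m \<theta> (Suc l) (vconcat (dimh L d l) z (\<lambda>k. if k = 0 then e else 0)) c"

lemma AGG_H_eq: "AGG L d m \<theta> (H_graph K \<beta>) l a c =
   Min ((\<lambda>u. FF l c (gnn_h L d m \<theta> (H_graph K \<beta>) l u) (ef (H_graph K \<beta>) u a)) ` nbhd (H_graph K \<beta>) a)"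
  by (simp add: AGG_def)

lemma AGG_J:
  assumes a: "a \<le> 2*K+1"
    and sym: "\<forall>u\<in>nbhd (H_graph K \<beta>) a. gnn_h L d m \<theta> (H_graph K \<beta>) l (sig K u) = gnn_h L d m \<theta> (H_graph K \<beta>) l u"
  shows "AGG L d m \<theta> (H_graph K \<beta>) l (sig K a) c = AGG L d m \<theta> (H_graph K \<beta>) l a c"
  unfolding AGG_H_eq nbhd_H_sig[OF a] image_image
proof (rule arg_cong[where f=Min], rule image_cong[OF refl])
  fix u assume u: "u \<in> nbhd (H_graph K \<beta>) a"
  have ul: "u \<le> 2*K+1" using nbhd_H_le[OF u a] by simp
  show "FF l c (gnn_h L d m \<theta> (H_graph K \<beta>) l (sig K u)) (ef (H_graph K \<beta>) (sig K u) (sig K a))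
      = FF l c (gnn_h L d m \<theta> (H_graph K \<beta>) l u) (ef (H_graph K \<beta>) u a)"
    using sym u by (simp only: ef_H_sig[OF ul a, of \<beta>])
qed

lemma AGG_N:
  assumes a: "a \<le> 2*K+1"
    and nd: "\<not> dep_c (dimh L d l + 1) (f_agg L d m \<theta> (Suc l)) c {..<dimh L d l}"
  shows "AGG L d m \<theta> (H_graph K \<beta>) l (sig K a) c = AGG L d m \<theta> (H_graph K \<beta>) l a c"
proof -
  have key: "FF l c z e = FF l c (\<lambda>_. 0) e" if z: "nonneg_vec (dimh L d l) z" and e: "e \<ge> 0" for z e
  proof -
    have n1: "nonneg_vec (dimh L d l + 1) (vconcat (dimh L d l) z (\<lambda>k. if k = 0 then e else 0))"
      by (rule vconc_nonneg[OF z e])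
    have n2: "nonneg_vec (dimh L d l + 1) (vconcat (dimh L d l) (\<lambda>_. 0) (\<lambda>k. if k = 0 then e else 0))"
      by (rule vconc_nonneg[OF _ e]) (simp add: nonneg_vec_def)
    have ag: "\<forall>i<dimh L d l + 1. i \<notin> {..<dimh L d l} \<longrightarrow>
       vconcat (dimh L d l) z (\<lambda>k. if k = 0 then e else 0) i = vconcat (dimh L d l) (\<lambda>_. 0) (\<lambda>k. if k = 0 then e else 0) i"
      by (auto simp: vconcat_def)
    show ?thesis using nd n1 n2 ag unfolding dep_c_def by blast
  qed
  have "AGG L d m \<theta> (H_graph K \<beta>) l v c =
     Min ((\<lambda>u. FF l c (\<lambda>_. 0) (ef (H_graph K \<beta>) u v)) ` nbhd (H_graph K \<beta>) v)" for v
    unfolding AGG_H_eq using key[OF hH_nonneg ef_H_nonneg] by simp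
  moreover have "(\<lambda>u. FF l c (\<lambda>_. 0) (ef (H_graph K \<beta>) u (sig K a))) ` nbhd (H_graph K \<beta>) (sig K a)
      = (\<lambda>u. FF l c (\<lambda>_. 0) (ef (H_graph K \<beta>) u a)) ` nbhd (H_graph K \<beta>) a"
    unfolding nbhd_H_sig[OF a] image_image
  proof (rule image_cong[OF refl])
    fix u assume u: "u \<in> nbhd (H_graph K \<beta>) a"
    have ul: "u \<le> 2*K+1" using nbhd_H_le[OF u a] by simp
    show "FF l c (\<lambda>_. 0) (ef (H_graph K \<beta>) (sig K u) (sig K a)) = FF l c (\<lambda>_. 0) (ef (H_graph K \<beta>) u a)"
      by (simp only: ef_H_sig[OF ul a, of \<beta>])
  qed
  ultimately show ?thesis by simp
qed

lemma AGG_E: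
  assumes a: "a \<le> 2*K+1"
    and nd: "\<not> dep_c (dimh L d l + 1) (f_agg L d m \<theta> (Suc l)) c {dimh L d l}"
    and sa: "gnn_h L d m \<theta> (H_graph K \<beta>) l (sig K a) = gnn_h L d m \<theta> (H_graph K \<beta>) l a"
  shows "AGG L d m \<theta> (H_graph K \<beta>) l (sig K a) c = AGG L d m \<theta> (H_graph K \<beta>) l a c"
proof -
  have key: "FF l c z e = FF l c z 0" if z: "nonneg_vec (dimh L d l) z" and e: "e \<ge> 0" for z e
  proof -
    have n1: "nonneg_vec (dimh L d l + 1) (vconcat (dimh L d l) z (\<lambda>k. if k = 0 then e else 0))"
      by (rule vconc_nonneg[OF z e])
    have n2: "nonneg_vec (dimh L d l + 1) (vconcat (dimh L d l) z (\<lambda>k. if k = 0 then 0 else 0))"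
      using vconc_nonneg[OF z, of 0] by simp
    have ag: "\<forall>i<dimh L d l + 1. i \<notin> {dimh L d l} \<longrightarrow>
       vconcat (dimh L d l) z (\<lambda>k. if k = 0 then e else 0) i = vconcat (dimh L d l) z (\<lambda>k. if k = 0 then 0 else 0) i"
      by (auto simp: vconcat_def)
    show ?thesis using nd n1 n2 ag unfolding dep_c_def by blast
  qed
  have "AGG L d m \<theta> (H_graph K \<beta>) l v c =
     Min ((\<lambda>u. FF l c (gnn_h L d m \<theta> (H_graph K \<beta>) l u) 0) ` nbhd (H_graph K \<beta>) v)" for v
    unfolding AGG_H_eq using key[OF hH_nonneg ef_H_nonneg] by simp
  moreover have "nbhd (H_graph K \<beta>) a = insert a {u. adj (H_graph K \<beta>) u a}" by (simp add: nbhd_def)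
  ultimately show ?thesis using nbhd_H_twin[OF a, of \<beta>] sa by simp
qed

end

definition Sy :: "nat \<Rightarrow> nat \<Rightarrow> (nat \<Rightarrow> 'a) \<Rightarrow> bool" where
  "Sy K t g \<longleftrightarrow> (\<forall>a \<le> 2*K+1. t \<le> H_idx K a \<longrightarrow> g (sig K a) = g a)"

fun ttf :: "(nat \<Rightarrow> bool) \<Rightarrow> (nat \<Rightarrow> bool) \<Rightarrow> nat \<Rightarrow> nat" where
  "ttf C E 0 = 1"
| "ttf C E (Suc l) = (if C (Suc l) then 0 else if E (Suc l) \<and> ttf C E l \<noteq> 0 then Suc (ttf C E l) else ttf C E l)"

lemma ttf_le: "ttf C E l \<le> 1 + card {l'\<in>{1..l}. E l'}"
proof (induction l)
  case 0 thus ?case by simp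
next
  case (Suc l)
  have fin: "finite {l'\<in>{1..l}. E l'}" by simp
  show ?case
  proof (cases "E (Suc l)")
    case True
    have "{l'\<in>{1..Suc l}. E l'} = insert (Suc l) {l'\<in>{1..l}. E l'}" using True by auto
    hence "card {l'\<in>{1..Suc l}. E l'} = Suc (card {l'\<in>{1..l}. E l'})" using fin by simp
    thus ?thesis using Suc.IH by simp
  next
    case False
    have "{l'\<in>{1..Suc l}. E l'} = {l'\<in>{1..l}. E l'}" using False by (auto simp: le_Suc_eq)
    thus ?thesis using Suc.IH False by simp
  qed
qed

lemma ttf_C: "l' \<in> {1..l} \<Longrightarrow> C l' \<Longrightarrow> ttf C E l = 0"
proof (induction l)
  case 0 thus ?case by simp
next
  case (Suc l)
  show ?case
  proof (cases "l' = Suc l")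
    case True thus ?thesis using Suc.prems by simp
  next
    case False
    hence "ttf C E l = 0" using Suc by auto
    thus ?thesis by simp
  qed
qed

context
  fixes L d m :: nat and \<theta> :: gnn_params and K :: nat and \<beta> :: real
  assumes m1: "m \<ge> 1" and bpos: "\<beta> > 0"
begin

lemma step_const:
  assumes "constant_on_nonneg (wup L d m (Suc l) 0) (f_up L d m \<theta> (Suc l))"
  shows "Sy K 0 (gnn_h L d m \<theta> (H_graph K \<beta>) (Suc l))"
  unfolding Sy_def gnn_h_Suc'
proof (intro allI impI)
  fix a :: nat
  have "nonneg_vec (wup L d m (Suc l) 0) (vconcat d (AGG L d m \<theta> (H_graph K \<beta>) l (sig K a)) (gnn_h L d m \<theta> (H_graph K \<beta>) l (sig K a)))"
    by (rule IN_H_nonneg[OF m1 bpos])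
  moreover have "nonneg_vec (wup L d m (Suc l) 0) (vconcat d (AGG L d m \<theta> (H_graph K \<beta>) l a) (gnn_h L d m \<theta> (H_graph K \<beta>) l a))"
    by (rule IN_H_nonneg[OF m1 bpos])
  ultimately show "f_up L d m \<theta> (Suc l) (vconcat d (AGG L d m \<theta> (H_graph K \<beta>) l (sig K a)) (gnn_h L d m \<theta> (H_graph K \<beta>) l (sig K a)))
     = f_up L d m \<theta> (Suc l) (vconcat d (AGG L d m \<theta> (H_graph K \<beta>) l a) (gnn_h L d m \<theta> (H_graph K \<beta>) l a))"
    using assms unfolding constant_on_nonneg_def by blast
qed

lemma step_joint:
  assumes S: "Sy K t (gnn_h L d m \<theta> (H_graph K \<beta>) l)"
  shows "Sy K (if t = 0 then 0 else Suc t) (gnn_h L d m \<theta> (H_graph K \<beta>) (Suc l))"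
  unfolding Sy_def
proof (intro allI impI)
  fix a assume a: "a \<le> 2*K+1" and ta: "(if t = 0 then 0 else Suc t) \<le> H_idx K a"
  have sym: "\<forall>u\<in>nbhd (H_graph K \<beta>) a. gnn_h L d m \<theta> (H_graph K \<beta>) l (sig K u) = gnn_h L d m \<theta> (H_graph K \<beta>) l u"
  proof
    fix u assume u: "u \<in> nbhd (H_graph K \<beta>) a"
    have ul: "u \<le> 2*K+1" "H_idx K a \<le> Suc (H_idx K u)" using nbhd_H_le[OF u a] by auto
    have "t \<le> H_idx K u" using ta ul(2) by (cases "t = 0") auto
    thus "gnn_h L d m \<theta> (H_graph K \<beta>) l (sig K u) = gnn_h L d m \<theta> (H_graph K \<beta>) l u"
      using S ul(1) unfolding Sy_def by blast
  qed
  have sa: "gnn_h L d m \<theta> (H_graph K \<beta>) l (sig K a) = gnn_h L d m \<theta> (H_graph K \<beta>) l a"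
    using sym by (simp add: nbhd_def)
  have "AGG L d m \<theta> (H_graph K \<beta>) l (sig K a) = AGG L d m \<theta> (H_graph K \<beta>) l a"
    using AGG_J[OF m1 bpos a sym] by auto
  thus "gnn_h L d m \<theta> (H_graph K \<beta>) (Suc l) (sig K a) = gnn_h L d m \<theta> (H_graph K \<beta>) (Suc l) a"
    unfolding gnn_h_Suc' using sa by simp
qed

lemma step_nonjoint:
  assumes S: "Sy K t (gnn_h L d m \<theta> (H_graph K \<beta>) l)"
    and nej: "\<not> ej L d m \<theta> (Suc l)"
  shows "Sy K t (gnn_h L d m \<theta> (H_graph K \<beta>) (Suc l))"
  unfolding Sy_def
proof (intro allI impI)
  fix a assume a: "a \<le> 2*K+1" and ta: "t \<le> H_idx K a"
  have sa: "gnn_h L d m \<theta> (H_graph K \<beta>) l (sig K a) = gnn_h L d m \<theta> (H_graph K \<beta>) l a"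
    using S a ta unfolding Sy_def by blast
  let ?x = "vconcat d (AGG L d m \<theta> (H_graph K \<beta>) l (sig K a)) (gnn_h L d m \<theta> (H_graph K \<beta>) l (sig K a))"
  let ?y = "vconcat d (AGG L d m \<theta> (H_graph K \<beta>) l a) (gnn_h L d m \<theta> (H_graph K \<beta>) l a)"
  have agree: "\<forall>i<wup L d m (Suc l) 0. i \<notin> Jset L d m \<theta> (Suc l) \<longrightarrow> ?x i = ?y i"
  proof (intro allI impI)
    fix i assume i: "i < wup L d m (Suc l) 0" "i \<notin> Jset L d m \<theta> (Suc l)"
    show "?x i = ?y i"
    proof (cases "i < d")
      case True
      hence nj: "\<not> jointc L d m \<theta> (Suc l) i" using i(2) by (simp add: Jset_def)
      have "AGG L d m \<theta> (H_graph K \<beta>) l (sig K a) i = AGG L d m \<theta> (H_graph K \<beta>) l a i"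
      proof (cases "dep_c (dimh L d l + 1) (f_agg L d m \<theta> (Suc l)) i {..<dimh L d l}")
        case True
        hence "\<not> dep_c (dimh L d l + 1) (f_agg L d m \<theta> (Suc l)) i {dimh L d l}"
          using nj by (simp add: jointc_def)
        thus ?thesis by (rule AGG_E[OF m1 bpos a _ sa])
      next
        case False
        thus ?thesis by (rule AGG_N[OF m1 bpos a])
      qed
      thus ?thesis using True by (simp add: vconcat_def)
    next
      case False thus ?thesis using sa by (simp add: vconcat_def)
    qed
  qed
  have "f_up L d m \<theta> (Suc l) ?x = f_up L d m \<theta> (Suc l) ?y"
  proof (cases "?x = ?y")
    case True thus ?thesis by simp
  next
    case False
    have nx: "nonneg_vec (wup L d m (Suc l) 0) ?x" by (rule IN_H_nonneg[OF m1 bpos])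
    have ny: "nonneg_vec (wup L d m (Suc l) 0) ?y" by (rule IN_H_nonneg[OF m1 bpos])
    show ?thesis using nej agree nx ny False
      unfolding ej_def depends_on_def by blast
  qed
  thus "gnn_h L d m \<theta> (H_graph K \<beta>) (Suc l) (sig K a) = gnn_h L d m \<theta> (H_graph K \<beta>) (Suc l) a"
    unfolding gnn_h_Suc' .
qed

lemma sym_all:
  "Sy K (ttf (\<lambda>l. constant_on_nonneg (wup L d m l 0) (f_up L d m \<theta> l)) (ej L d m \<theta>) l)
      (gnn_h L d m \<theta> (H_graph K \<beta>) l)"
proof (induction l)
  case 0
  show ?case unfolding Sy_def
  proof (intro allI impI)
    fix a assume a: "a \<le> 2*K+1" "ttf (\<lambda>l. constant_on_nonneg (wup L d m l 0) (f_up L d m \<theta> l)) (ej L d m \<theta>) 0 \<le> H_idx K a"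
    have i1: "1 \<le> H_idx K a" using a(2) by simp
    have "a \<noteq> 0" using i1 by (cases "a \<le> K") (auto simp: H_idx_def)
    moreover have "sig K a \<noteq> 0" using i1 by (cases "a \<le> K") (simp_all add: sig_def H_idx_def)
    ultimately show "gnn_h L d m \<theta> (H_graph K \<beta>) 0 (sig K a) = gnn_h L d m \<theta> (H_graph K \<beta>) 0 a"
      by (simp add: H_graph_def fun_eq_iff)
  qed
next
  case (Suc l)
  define C where "C = (\<lambda>l. constant_on_nonneg (wup L d m l 0) (f_up L d m \<theta> l))"
  have IH: "Sy K (ttf C (ej L d m \<theta>) l) (gnn_h L d m \<theta> (H_graph K \<beta>) l)" using Suc.IH unfolding C_def .
  have "Sy K (ttf C (ej L d m \<theta>) (Suc l)) (gnn_h L d m \<theta> (H_graph K \<beta>) (Suc l))"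
  proof (cases "C (Suc l)")
    case True
    hence eq: "ttf C (ej L d m \<theta>) (Suc l) = 0" by simp
    show ?thesis unfolding eq by (rule step_const[OF True[unfolded C_def]])
  next
    case nc: False
    show ?thesis
    proof (cases "ej L d m \<theta> (Suc l) \<and> ttf C (ej L d m \<theta>) l \<noteq> 0")
      case True
      hence eq: "ttf C (ej L d m \<theta>) (Suc l) = (if ttf C (ej L d m \<theta>) l = 0 then 0 else Suc (ttf C (ej L d m \<theta>) l))"
        using nc by simp
      show ?thesis unfolding eq by (rule step_joint[OF IH])
    next
      case False
      show ?thesis
      proof (cases "ej L d m \<theta> (Suc l)")
        case True
        hence eq: "ttf C (ej L d m \<theta>) (Suc l) = (if ttf C (ej L d m \<theta>) l = 0 then 0 else Suc (ttf C (ej L d m \<theta>) l))"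
          using False nc by simp
        show ?thesis unfolding eq by (rule step_joint[OF IH])
      next
        case nej: False
        hence eq: "ttf C (ej L d m \<theta>) (Suc l) = ttf C (ej L d m \<theta>) l"
          using nc by simp
        show ?thesis unfolding eq by (rule step_nonjoint[OF IH nej])
      qed
    qed
  qed
  thus ?case unfolding C_def .
qed

lemma H_fail:
  assumes "(\<exists>l\<in>{1..L}. constant_on_nonneg (wup L d m l 0) (f_up L d m \<theta> l)) \<or> card {l\<in>{1..L}. ej L d m \<theta> l} < K"
  shows "gnn_out L d m \<theta> (H_graph K \<beta>) (2*K+1) = gnn_out L d m \<theta> (H_graph K \<beta>) K"
proof -
  let ?t = "ttf (\<lambda>l. constant_on_nonneg (wup L d m l 0) (f_up L d m \<theta> l)) (ej L d m \<theta>) L"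
  have "?t \<le> K"
  proof (cases "\<exists>l\<in>{1..L}. constant_on_nonneg (wup L d m l 0) (f_up L d m \<theta> l)")
    case True
    then obtain l' where "l' \<in> {1..L}" "constant_on_nonneg (wup L d m l' 0) (f_up L d m \<theta> l')" by blast
    hence "?t = 0" by (intro ttf_C[of l']) simp_all
    thus ?thesis by simp
  next
    case False
    hence "card {l\<in>{1..L}. ej L d m \<theta> l} < K" using assms by blast
    thus ?thesis using ttf_le[of "\<lambda>l. constant_on_nonneg (wup L d m l 0) (f_up L d m \<theta> l)" "ej L d m \<theta>" L]
      by linarith
  qed
  moreover have "H_idx K K = K" by (simp add: H_idx_def)
  ultimately have tK: "?t \<le> H_idx K K" by simp
  have sp: "\<forall>a\<le>2*K+1. ?t \<le> H_idx K a \<longrightarrow> gnn_h L d m \<theta> (H_graph K \<beta>) L (sig K a) = gnn_h L d m \<theta> (H_graph K \<beta>) L a"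
    using sym_all[of L] unfolding Sy_def .
  have "gnn_h L d m \<theta> (H_graph K \<beta>) L (sig K K) = gnn_h L d m \<theta> (H_graph K \<beta>) L K"
    using sp[rule_format, OF _ tK] by simp
  moreover have "sig K K = 2*K+1" by (simp add: sig_def)
  ultimately have "gnn_h L d m \<theta> (H_graph K \<beta>) L (2*K+1) = gnn_h L d m \<theta> (H_graph K \<beta>) L K"
    by simp
  thus ?thesis unfolding gnn_out_def by simp
qed

end


lemma wagg0: "wagg L d l 0 = dimh L d (l - 1) + 1" by (simp add: wagg_def)
lemma waggS: "j \<noteq> 0 \<Longrightarrow> wagg L d l j = d" by (simp add: wagg_def)

lemma nonneg_vec_eq:
  "nonneg_vec n x \<Longrightarrow> nonneg_vec n y \<Longrightarrow> (\<forall>i<n. x i = y i) \<Longrightarrow> x = y"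
proof (rule ext)
  fix i assume a: "nonneg_vec n x" "nonneg_vec n y" "\<forall>i<n. x i = y i"
  show "x i = y i" using a unfolding nonneg_vec_def by (cases "i < n") auto
qed

lemma ej_Jne: assumes "ej L d m \<theta> l" shows "Jset L d m \<theta> l \<noteq> {}"
proof
  assume J: "Jset L d m \<theta> l = {}"
  obtain x y where xy: "nonneg_vec (wup L d m l 0) x" "nonneg_vec (wup L d m l 0) y" "x \<noteq> y"
     "\<forall>i<wup L d m l 0. i \<notin> Jset L d m \<theta> l \<longrightarrow> x i = y i"
    using assms unfolding ej_def depends_on_def by blast
  have "x = y" using nonneg_vec_eq[OF xy(1,2)] xy(4) J by simp
  thus False using xy(3) by simp
qed

lemma ej_joint: "ej L d m \<theta> l \<Longrightarrow> \<exists>c<d. jointc L d m \<theta> l c"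
  using ej_Jne[of L d m \<theta> l] unfolding Jset_def by blast

lemma dep_c_nonconst: assumes "dep_c n f c S" shows "\<exists>x y. f x \<noteq> f y"
proof -
  obtain x y where "f x c \<noteq> f y c" using assms unfolding dep_c_def by blast
  hence "f x \<noteq> f y" by auto
  thus ?thesis by blast
qed

lemma joint_costs:
  assumes m1: "m \<ge> 1" and jc: "jointc L d m \<theta> l c"
  shows "\<forall>j\<in>{1..m}. nnz_mat (wagg L d l j) (wagg L d l (j - 1)) (Wagg \<theta> l j) \<ge> 1"
    and "nnz_mat (wagg L d l 1) (wagg L d l 0) (Wagg \<theta> l 1) \<ge> 2"
proof -
  define p where "p = dimh L d (l - 1)"
  have dn: "dep_c (p + 1) (f_agg L d m \<theta> l) c {..<p}" and de: "dep_c (p + 1) (f_agg L d m \<theta> l) c {p}"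
    using jc unfolding jointc_def p_def by auto
  obtain x0 y0 where xy0: "f_agg L d m \<theta> l x0 \<noteq> f_agg L d m \<theta> l y0"
    using dep_c_nonconst[OF dn] by blast
  show "\<forall>j\<in>{1..m}. nnz_mat (wagg L d l j) (wagg L d l (j - 1)) (Wagg \<theta> l j) \<ge> 1"
  proof
    fix j assume j: "j \<in> {1..m}"
    show "nnz_mat (wagg L d l j) (wagg L d l (j - 1)) (Wagg \<theta> l j) \<ge> 1"
    proof (rule ccontr)
      assume "\<not> ?thesis"
      hence "nnz_mat (wagg L d l j) (wagg L d l (j - 1)) (Wagg \<theta> l j) = 0" by simp
      hence "f_agg L d m \<theta> l x0 = f_agg L d m \<theta> l y0"
        unfolding f_agg_def by (rule mlp_zero_layer[where j=j]) (use j \<open>nnz_mat _ _ _ = 0\<close> in auto)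
      thus False using xy0 by simp
    qed
  qed
  show "nnz_mat (wagg L d l 1) (wagg L d l 0) (Wagg \<theta> l 1) \<ge> 2"
  proof (rule ccontr)
    assume "\<not> ?thesis"
    hence "nnz_mat (wagg L d l (Suc 0)) (wagg L d l 0) (Wagg \<theta> l (Suc 0)) \<le> 1" by simp
    from mlp_one_col[where w="wagg L d l" and W="Wagg \<theta> l" and j=0 and b="bagg \<theta> l", OF this]
    obtain k0 where k0: "\<forall>x y. x k0 = y k0 \<longrightarrow>
        mlp (wagg L d l) (Wagg \<theta> l) (bagg \<theta> l) (Suc 0) x = mlp (wagg L d l) (Wagg \<theta> l) (bagg \<theta> l) (Suc 0) y"
      by auto
    have k0m: "f_agg L d m \<theta> l x = f_agg L d m \<theta> l y" if xy: "x k0 = y k0" for x y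
    proof -
      have "mlp (wagg L d l) (Wagg \<theta> l) (bagg \<theta> l) (Suc 0) x = mlp (wagg L d l) (Wagg \<theta> l) (bagg \<theta> l) (Suc 0) y"
        using k0 xy by blast
      thus ?thesis unfolding f_agg_def by (rule mlp_eq_mono) (use m1 in simp)
    qed
    show False
    proof (cases "k0 < p")
      case True
      obtain x y where xy: "nonneg_vec (p+1) x" "nonneg_vec (p+1) y" "\<forall>i<p+1. i \<notin> {p} \<longrightarrow> x i = y i"
          "f_agg L d m \<theta> l x c \<noteq> f_agg L d m \<theta> l y c"
        using de unfolding dep_c_def by blast
      have "x k0 = y k0" using xy(3) True by auto
      hence "f_agg L d m \<theta> l x = f_agg L d m \<theta> l y" by (rule k0m)
      thus False using xy(4) by simp
    next
      case False
      obtain x y where xy: "nonneg_vec (p+1) x" "nonneg_vec (p+1) y" "\<forall>i<p+1. i \<notin> {..<p} \<longrightarrow> x i = y i"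
          "f_agg L d m \<theta> l x c \<noteq> f_agg L d m \<theta> l y c"
        using dn unfolding dep_c_def by blast
      have "x k0 = y k0"
      proof (cases "k0 = p")
        case True thus ?thesis using xy(3) by auto
      next
        case False
        hence "k0 \<ge> p + 1" using \<open>\<not> k0 < p\<close> by simp
        thus ?thesis using xy(1,2) unfolding nonneg_vec_def by auto
      qed
      hence "f_agg L d m \<theta> l x = f_agg L d m \<theta> l y" by (rule k0m)
      thus False using xy(4) by simp
    qed
  qed
qed

lemma up_costs:
  assumes "\<not> constant_on_nonneg (wup L d m l 0) (f_up L d m \<theta> l)"
  shows "\<forall>j\<in>{1..m}. nnz_mat (wup L d m l j) (wup L d m l (j - 1)) (Wup \<theta> l j) \<ge> 1"
proof
  fix j assume j: "j \<in> {1..m}"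
  obtain x y where xy: "f_up L d m \<theta> l x \<noteq> f_up L d m \<theta> l y"
    using assms unfolding constant_on_nonneg_def by blast
  show "nnz_mat (wup L d m l j) (wup L d m l (j - 1)) (Wup \<theta> l j) \<ge> 1"
  proof (rule ccontr)
    assume "\<not> ?thesis"
    hence "nnz_mat (wup L d m l j) (wup L d m l (j - 1)) (Wup \<theta> l j) = 0" by simp
    hence "f_up L d m \<theta> l x = f_up L d m \<theta> l y"
      unfolding f_up_def by (rule mlp_zero_layer[where j=j]) (use j \<open>nnz_mat _ _ _ = 0\<close> in auto)
    thus False using xy by simp
  qed
qed

lemma joint_mp:
  assumes "jointc L d m \<theta> l c"
  shows "msg_passing L d m \<theta> l" "edge_dep_msg_passing L d m \<theta> l"
proof -
  have *: "dep_c n f c S \<Longrightarrow> depends_on n f S" for n f S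
  proof -
    assume "dep_c n f c S"
    then obtain x y where xy: "nonneg_vec n x" "nonneg_vec n y" "\<forall>i<n. i \<notin> S \<longrightarrow> x i = y i" "f x c \<noteq> f y c"
      unfolding dep_c_def by blast
    have "f x \<noteq> f y" using xy(4) by auto
    hence "x \<noteq> y" by auto
    thus "depends_on n f S" unfolding depends_on_def using xy \<open>f x \<noteq> f y\<close> by blast
  qed
  show "msg_passing L d m \<theta> l" using assms * unfolding jointc_def msg_passing_def by blast
  thus "edge_dep_msg_passing L d m \<theta> l" using assms * unfolding jointc_def edge_dep_msg_passing_def by blast
qed

lemma zero_not_mp:
  assumes "m \<ge> 1" "nnz_mat (wagg L d l 1) (wagg L d l 0) (Wagg \<theta> l 1) = 0"
  shows "\<not> msg_passing L d m \<theta> l"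
proof -
  have "f_agg L d m \<theta> l x = f_agg L d m \<theta> l y" for x y
    unfolding f_agg_def by (rule mlp_zero_layer[where j=1]) (use assms in auto)
  thus ?thesis unfolding msg_passing_def depends_on_def by blast
qed


lemma joint_row:
  assumes m1: "m \<ge> 1" and jc: "jointc L d m \<theta> l c"
    and w1: "nnz_mat (wagg L d l 1) (wagg L d l 0) (Wagg \<theta> l 1) = 2"
    and wj: "\<forall>j\<in>{2..m}. nnz_mat (wagg L d l j) (wagg L d l (j - 1)) (Wagg \<theta> l j) = 1"
  shows "\<exists>r. \<forall>i k. i < wagg L d l 1 \<and> k < wagg L d l 0 \<and> Wagg \<theta> l 1 i k \<noteq> 0 \<longrightarrow> i = r"
proof -
  define p where "p = dimh L d (l - 1)"
  define M where "M = mlp (wagg L d l) (Wagg \<theta> l) (bagg \<theta> l)"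
  have fa: "f_agg L d m \<theta> l = M m" unfolding f_agg_def M_def by simp
  have dn: "dep_c (p + 1) (M m) c {..<p}" and de: "dep_c (p + 1) (M m) c {p}"
    using jc unfolding jointc_def p_def fa by auto
  have w0: "wagg L d l 0 = p + 1" by (simp add: wagg_def p_def)
  obtain r where r: "\<forall>x y. M 1 x r = M 1 y r \<longrightarrow> M m x c = M m y c"
  proof (cases "m = 1")
    case True thus ?thesis using that[of c] by simp
  next
    case False
    hence m2: "m \<ge> 2" using m1 by simp
    have "nnz_mat (wagg L d l (Suc 1)) (wagg L d l 1) (Wagg \<theta> l (Suc 1)) \<le> 1"
      using bspec[OF wj, of 2] m2 by (simp add: numeral_2_eq_2)
    from mlp_one_col[where w="wagg L d l" and W="Wagg \<theta> l" and j=1 and b="bagg \<theta> l", OF this]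
    obtain k0 where k0: "\<forall>x y. M 1 x k0 = M 1 y k0 \<longrightarrow> M (Suc 1) x = M (Suc 1) y"
      unfolding M_def by blast
    have "M 1 x k0 = M 1 y k0 \<longrightarrow> M m x c = M m y c" for x y
    proof
      assume "M 1 x k0 = M 1 y k0"
      hence "M (Suc 1) x = M (Suc 1) y" using k0 by blast
      hence "M m x = M m y" unfolding M_def by (rule mlp_eq_mono) (use m2 in simp)
      thus "M m x c = M m y c" by simp
    qed
    thus ?thesis using that by blast
  qed
  obtain xn yn where xyn: "nonneg_vec (p+1) xn" "nonneg_vec (p+1) yn" "\<forall>i<p+1. i \<notin> {..<p} \<longrightarrow> xn i = yn i"
      "M m xn c \<noteq> M m yn c"
    using dn unfolding dep_c_def by blast
  obtain xe ye where xye: "nonneg_vec (p+1) xe" "nonneg_vec (p+1) ye" "\<forall>i<p+1. i \<notin> {p} \<longrightarrow> xe i = ye i"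
      "M m xe c \<noteq> M m ye c"
    using de unfolding dep_c_def by blast
  have rl: "r < wagg L d l 1"
  proof (rule ccontr)
    assume "\<not> ?thesis"
    hence "M 1 xn r = M 1 yn r" unfolding M_def by (simp add: relu_layer_def)
    thus False using r xyn(4) by blast
  qed
  have M1: "M 1 x r = max 0 ((\<Sum>k<p+1. Wagg \<theta> l 1 r k * x k) + bagg \<theta> l 1 r)" for x
    using rl unfolding M_def by (simp add: relu_layer_def w0)
  have A: "\<exists>k1<p. Wagg \<theta> l 1 r k1 \<noteq> 0"
  proof (rule ccontr)
    assume "\<not> ?thesis"
    hence z: "\<forall>k<p. Wagg \<theta> l 1 r k = 0" by auto
    have s: "(\<Sum>k<p+1. Wagg \<theta> l 1 r k * x k) = Wagg \<theta> l 1 r p * x p" for x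
      using z by simp
    have "xn p = yn p" using xyn(3) by auto
    hence "M 1 xn r = M 1 yn r" unfolding M1 s by simp
    thus False using r xyn(4) by blast
  qed
  then obtain k1 where k1: "k1 < p" "Wagg \<theta> l 1 r k1 \<noteq> 0" by blast
  have B: "Wagg \<theta> l 1 r p \<noteq> 0"
  proof
    assume z: "Wagg \<theta> l 1 r p = 0"
    have s: "(\<Sum>k<p+1. Wagg \<theta> l 1 r k * x k) = (\<Sum>k<p. Wagg \<theta> l 1 r k * x k)" for x
      using z by simp
    have "(\<Sum>k<p. Wagg \<theta> l 1 r k * xe k) = (\<Sum>k<p. Wagg \<theta> l 1 r k * ye k)"
      using xye(3) by (intro sum.cong) auto
    hence "M 1 xe r = M 1 ye r" unfolding M1 s by simp
    thus False using r xye(4) by blast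
  qed
  define S where "S = {(i, k). i < wagg L d l 1 \<and> k < wagg L d l 0 \<and> Wagg \<theta> l 1 i k \<noteq> 0}"
  have finS: "finite S" unfolding S_def by (rule finite_nnz)
  have cS: "card S = 2" using w1 unfolding S_def nnz_mat_def by simp
  have in1: "(r, k1) \<in> S" and in2: "(r, p) \<in> S" using rl k1 B unfolding S_def w0 by auto
  show ?thesis
  proof (intro exI allI impI)
    fix i k assume ik: "i < wagg L d l 1 \<and> k < wagg L d l 0 \<and> Wagg \<theta> l 1 i k \<noteq> 0"
    show "i = r"
    proof (rule ccontr)
      assume ir: "i \<noteq> r"
      have "(i, k) \<in> S" using ik unfolding S_def by simp
      hence "{(r, k1), (r, p), (i, k)} \<subseteq> S" using in1 in2 by simp
      hence "card {(r, k1), (r, p), (i, k)} \<le> card S" using finS by (rule card_mono[rotated])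
      moreover have "card {(r, k1), (r, p), (i, k)} = 3" using ir k1(1) by simp
      ultimately show False using cS by simp
    qed
  qed
qed


definition aggc :: "nat \<Rightarrow> nat \<Rightarrow> nat \<Rightarrow> gnn_params \<Rightarrow> nat \<Rightarrow> nat" where
  "aggc L d m \<theta> l = (\<Sum>j\<in>{1..m}. nnz_mat (wagg L d l j) (wagg L d l (j - 1)) (Wagg \<theta> l j)
                                   + nnz_vec (wagg L d l j) (bagg \<theta> l j))"

definition upc :: "nat \<Rightarrow> nat \<Rightarrow> nat \<Rightarrow> gnn_params \<Rightarrow> nat \<Rightarrow> nat" where
  "upc L d m \<theta> l = (\<Sum>j\<in>{1..m}. nnz_mat (wup L d m l j) (wup L d m l (j - 1)) (Wup \<theta> l j)
                                   + nnz_vec (wup L d m l j) (bup \<theta> l j))"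

lemma norm0_split: "norm0 L d m \<theta> = (\<Sum>l\<in>{1..L}. aggc L d m \<theta> l) + (\<Sum>l\<in>{1..L}. upc L d m \<theta> l)"
  unfolding norm0_def aggc_def upc_def by (simp add: sum.distrib[symmetric] add.assoc)

lemma sum_if1: "m \<ge> 1 \<Longrightarrow> (\<Sum>j\<in>{1..m}. (if j = 1 then 2 else 1::nat)) = m + 1"
proof -
  assume m: "m \<ge> 1"
  have "{1..m} = insert 1 {2..m}" using m by auto
  moreover have "(\<Sum>j\<in>{2..m}. (if j = 1 then 2 else 1::nat)) = m - 1" by simp
  ultimately show ?thesis using m by simp
qed

lemma upc_ge:
  assumes "\<not> constant_on_nonneg (wup L d m l 0) (f_up L d m \<theta> l)"
  shows "upc L d m \<theta> l \<ge> m"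
proof -
  have "(\<Sum>j\<in>{1..m}. (1::nat)) \<le> upc L d m \<theta> l"
    unfolding upc_def using up_costs[OF assms] by (intro sum_mono) fastforce
  thus ?thesis by simp
qed

lemma aggc_lb:
  assumes m1: "m \<ge> 1" and e: "ej L d m \<theta> l"
  shows "\<forall>j\<in>{1..m}. (if j = 1 then 2 else 1) \<le> nnz_mat (wagg L d l j) (wagg L d l (j - 1)) (Wagg \<theta> l j)
                                   + nnz_vec (wagg L d l j) (bagg \<theta> l j)"
proof -
  obtain c where c: "jointc L d m \<theta> l c" using ej_joint[OF e] by blast
  show ?thesis using joint_costs[OF m1 c] by fastforce
qed

lemma aggc_ge:
  assumes m1: "m \<ge> 1" and e: "ej L d m \<theta> l"
  shows "aggc L d m \<theta> l \<ge> m + 1"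
proof -
  have "(\<Sum>j\<in>{1..m}. (if j = 1 then 2 else 1::nat)) \<le> aggc L d m \<theta> l"
    unfolding aggc_def using aggc_lb[OF assms] by (intro sum_mono) blast
  thus ?thesis using sum_if1[OF m1] by simp
qed

lemma upc_tight:
  assumes "\<not> constant_on_nonneg (wup L d m l 0) (f_up L d m \<theta> l)" "upc L d m \<theta> l = m" "j \<in> {1..m}"
  shows "nnz_mat (wup L d m l j) (wup L d m l (j - 1)) (Wup \<theta> l j) = 1 \<and> nnz_vec (wup L d m l j) (bup \<theta> l j) = 0"
proof -
  have "(\<Sum>j\<in>{1..m}. (1::nat)) = upc L d m \<theta> l" using assms(2) by simp
  hence "1 = nnz_mat (wup L d m l j) (wup L d m l (j - 1)) (Wup \<theta> l j) + nnz_vec (wup L d m l j) (bup \<theta> l j)"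
    unfolding upc_def
    by (rule sum_mono_inv) (use up_costs[OF assms(1)] assms(3) in fastforce)+
  thus ?thesis using up_costs[OF assms(1)] assms(3) by fastforce
qed

lemma aggc_tight:
  assumes m1: "m \<ge> 1" and e: "ej L d m \<theta> l" and eq: "aggc L d m \<theta> l = m + 1" and j: "j \<in> {1..m}"
  shows "nnz_mat (wagg L d l j) (wagg L d l (j - 1)) (Wagg \<theta> l j) = (if j = 1 then 2 else 1)
      \<and> nnz_vec (wagg L d l j) (bagg \<theta> l j) = 0"
proof -
  have "(\<Sum>j\<in>{1..m}. (if j = 1 then 2 else 1::nat)) = aggc L d m \<theta> l" using eq sum_if1[OF m1] by simp
  hence "(if j = 1 then 2 else 1) = nnz_mat (wagg L d l j) (wagg L d l (j - 1)) (Wagg \<theta> l j) + nnz_vec (wagg L d l j) (bagg \<theta> l j)"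
    unfolding aggc_def
    by (rule sum_mono_inv) (use aggc_lb[OF m1 e] j in auto)
  moreover obtain c where c: "jointc L d m \<theta> l c" using ej_joint[OF e] by blast
  ultimately show ?thesis using joint_costs[OF m1 c] j by (cases "j = 1") fastforce+
qed

lemma aggc_zero:
  assumes "aggc L d m \<theta> l = 0" "j \<in> {1..m}"
  shows "nnz_mat (wagg L d l j) (wagg L d l (j - 1)) (Wagg \<theta> l j) = 0 \<and> nnz_vec (wagg L d l j) (bagg \<theta> l j) = 0"
  using assms unfolding aggc_def by simp


lemma count_main:
  fixes L d m K :: nat and \<theta> :: gnn_params
  defines "E \<equiv> {l\<in>{1..L}. ej L d m \<theta> l}"
  assumes m1: "m \<ge> 1"
    and nc: "\<forall>l\<in>{1..L}. \<not> constant_on_nonneg (wup L d m l 0) (f_up L d m \<theta> l)"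
    and cE: "K \<le> card E"
  shows "norm0 L d m \<theta> \<ge> m*L + m*K + K"
    and "norm0 L d m \<theta> = m*L + m*K + K \<Longrightarrow> card E = K \<and> (\<forall>l\<in>{1..L}. upc L d m \<theta> l = m)
          \<and> (\<forall>l\<in>E. aggc L d m \<theta> l = m + 1) \<and> (\<forall>l\<in>{1..L} - E. aggc L d m \<theta> l = 0)"
proof -
  define X where "X = (\<Sum>l\<in>{1..L}. upc L d m \<theta> l)"
  define SE where "SE = (\<Sum>l\<in>E. aggc L d m \<theta> l)"
  define SR where "SR = (\<Sum>l\<in>{1..L} - E. aggc L d m \<theta> l)"
  have Esub: "E \<subseteq> {1..L}" unfolding E_def by auto
  have finE: "finite E" using Esub finite_subset by blast
  have Y: "(\<Sum>l\<in>{1..L}. aggc L d m \<theta> l) = SE + SR"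
    unfolding SE_def SR_def using sum.subset_diff[OF Esub, of "aggc L d m \<theta>"] by (simp add: add.commute)
  have n0: "norm0 L d m \<theta> = X + SE + SR" unfolding norm0_split X_def Y by simp
  have Xge: "X \<ge> (\<Sum>l\<in>{1..L}. m)" unfolding X_def using upc_ge nc by (intro sum_mono) blast
  hence Xge': "X \<ge> m * L" by (simp add: mult.commute)
  have SEge: "SE \<ge> (\<Sum>l\<in>E. m + 1)" unfolding SE_def using aggc_ge[OF m1] by (intro sum_mono) (auto simp: E_def)
  hence SEge': "SE \<ge> (m + 1) * card E" by (simp add: mult.commute)
  have "(m + 1) * card E \<ge> (m + 1) * K" using cE by (rule mult_le_mono2)
  moreover have "m * K + K = (m + 1) * K" by simp
  ultimately show ge: "norm0 L d m \<theta> \<ge> m*L + m*K + K" using n0 Xge' SEge' by linarith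
  assume eq: "norm0 L d m \<theta> = m*L + m*K + K"
  have "(m + 1) * card E \<ge> (m + 1) * K" using cE by (rule mult_le_mono2)
  hence X: "X = m * L" and SR0: "SR = 0" and SEv: "SE = (m + 1) * card E" and mc: "(m + 1) * card E = (m + 1) * K"
    using eq n0 Xge' SEge' \<open>m * K + K = (m + 1) * K\<close> by linarith+
  have cardE: "card E = K" using mc by (metis mult_cancel1 add_gr_0 zero_less_one not_gr_zero)
  have up: "\<forall>l\<in>{1..L}. upc L d m \<theta> l = m"
  proof
    fix l assume l: "l \<in> {1..L}"
    have "(\<Sum>l\<in>{1..L}. m) = (\<Sum>l\<in>{1..L}. upc L d m \<theta> l)" using X unfolding X_def by simp
    thus "upc L d m \<theta> l = m"
      by (rule sum_mono_inv[symmetric]) (use upc_ge nc l in auto)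
  qed
  have ag: "\<forall>l\<in>E. aggc L d m \<theta> l = m + 1"
  proof
    fix l assume l: "l \<in> E"
    have "(\<Sum>l\<in>E. m + 1) = (\<Sum>l\<in>E. aggc L d m \<theta> l)" using SEv unfolding SE_def by simp
    thus "aggc L d m \<theta> l = m + 1"
      by (rule sum_mono_inv[symmetric]) (use aggc_ge[OF m1] l finE in \<open>auto simp: E_def\<close>)
  qed
  have z: "\<forall>l\<in>{1..L} - E. aggc L d m \<theta> l = 0"
    using SR0 unfolding SR_def by simp
  show "card E = K \<and> (\<forall>l\<in>{1..L}. upc L d m \<theta> l = m)
          \<and> (\<forall>l\<in>E. aggc L d m \<theta> l = m + 1) \<and> (\<forall>l\<in>{1..L} - E. aggc L d m \<theta> l = 0)"
    using cardE up ag z by blast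
qed


section \<open>The optimal construction\<close>

definition theta0 :: "nat \<Rightarrow> nat \<Rightarrow> nat \<Rightarrow> gnn_params" where
  "theta0 L d K = \<lparr> Wagg = (\<lambda>l j i k. if l \<le> K \<and> i = 0
        then (if k = 0 then 1 else 0) + (if j = 1 \<and> k = dimh L d (l - 1) then 1 else 0) else 0),
     bagg = (\<lambda>l j i. 0),
     Wup = (\<lambda>l j i k. if i = 0 \<and> k = (if j = 1 \<and> K < l then d else 0) then 1 else 0),
     bup = (\<lambda>l j i. 0) \<rparr>"

lemma sum_single:
  assumes "a < c" "\<forall>k. k \<noteq> a \<longrightarrow> f k = 0"
  shows "(\<Sum>k<(c::nat). f k) = (f a :: real)"
proof -
  have "(\<Sum>k<c. f k) = (\<Sum>k\<in>{a}. f k)" by (rule sum.mono_neutral_right) (use assms in auto)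
  thus ?thesis by simp
qed

lemma dimh_pos: "d \<ge> 1 \<Longrightarrow> dimh L d l \<ge> 1" by (simp add: dimh_def)

lemma mlp_chain:
  assumes W: "\<forall>j. 2 \<le> j \<longrightarrow> j \<le> n \<longrightarrow> (\<forall>i k. W j i k = (if i = 0 \<and> k = 0 then 1 else 0)) \<and> (\<forall>i. b j i = 0)"
    and w: "\<forall>j. 0 < w j" and m1: "mlp w W b 1 x = (\<lambda>i. if i = 0 then v else 0)" and v: "v \<ge> 0"
  shows "1 \<le> j \<Longrightarrow> j \<le> n \<Longrightarrow> mlp w W b j x = (\<lambda>i. if i = 0 then v else 0)"
proof (induction j)
  case 0 thus ?case by simp
next
  case (Suc j)
  show ?case
  proof (cases "j = 0")
    case True thus ?thesis using m1 by simp
  next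
    case False
    have IH: "mlp w W b j x = (\<lambda>i. if i = 0 then v else 0)" using Suc False by simp
    have Wj: "\<forall>i k. W (Suc j) i k = (if i = 0 \<and> k = 0 then 1 else 0)" "\<forall>i. b (Suc j) i = 0"
      using W Suc.prems False by auto
    have s: "(\<Sum>k<w j. W (Suc j) i k * mlp w W b j x k) = (if i = 0 then v else 0)" for i
      by (subst sum_single[of 0]) (use w Wj IH in auto)
    show ?thesis unfolding mlp.simps relu_layer_def s
      using w[rule_format, of "Suc j"] v by (auto simp: fun_eq_iff Wj(2))
  qed
qed

context
  fixes L d m K :: nat
  assumes d1: "d \<ge> 1" and m1: "m \<ge> 1"
begin

lemma wagg_pos: "0 < wagg L d l j" using d1 by (simp add: wagg_def)
lemma wup_pos: "0 < wup L d m l j" using d1 by (simp add: wup_def dimh_def)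

lemma agg0_le:
  assumes l: "l \<le> K"
  shows "f_agg L d m (theta0 L d K) l x = (\<lambda>i. if i = 0 then max 0 (x 0 + x (dimh L d (l - 1))) else 0)"
proof -
  define p where "p = dimh L d (l - 1)"
  have p1: "p \<ge> 1" unfolding p_def by (rule dimh_pos[OF d1])
  let ?v = "max 0 (x 0 + x p)"
  have s: "(\<Sum>k<p + 1. Wagg (theta0 L d K) l 1 i k * x k) = (if i = 0 then x 0 + x p else 0)" for i
  proof (cases "i = 0")
    case True
    have "(\<Sum>k<p + 1. Wagg (theta0 L d K) l 1 i k * x k) = (\<Sum>k<p + 1. (if k = 0 then x k else 0) + (if k = p then x k else 0))"
      using True l by (intro sum.cong) (auto simp: theta0_def p_def)
    also have "\<dots> = x 0 + x p" using p1 by (simp add: sum.distrib)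
    finally show ?thesis using True by simp
  next
    case False thus ?thesis by (simp add: theta0_def)
  qed
  have "mlp (wagg L d l) (Wagg (theta0 L d K) l) (bagg (theta0 L d K) l) 1 x
      = relu_layer d (p + 1) (Wagg (theta0 L d K) l 1) (bagg (theta0 L d K) l 1) x"
    by (simp add: wagg_def p_def)
  also have "\<dots> = (\<lambda>i. if i = 0 then ?v else 0)"
    unfolding relu_layer_def s using d1 by (auto simp: theta0_def fun_eq_iff)
  finally have one: "mlp (wagg L d l) (Wagg (theta0 L d K) l) (bagg (theta0 L d K) l) 1 x = (\<lambda>i. if i = 0 then ?v else 0)" .
  show ?thesis unfolding f_agg_def p_def[symmetric]
    by (rule mlp_chain[OF _ _ one, of m]) (use m1 wagg_pos l in \<open>auto simp: theta0_def\<close>)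
qed

lemma agg0_gt:
  assumes "K < l"
  shows "f_agg L d m (theta0 L d K) l x = (\<lambda>_. 0)"
proof -
  obtain m' where m': "m = Suc m'" using m1 by (cases m) auto
  show ?thesis unfolding f_agg_def m' using assms by (auto simp: relu_layer_def theta0_def fun_eq_iff)
qed

lemma up0:
  assumes l: "1 \<le> l"
  shows "f_up L d m (theta0 L d K) l y = (\<lambda>i. if i = 0 then max 0 (y (if K < l then d else 0)) else 0)"
proof -
  define s where "s = (if K < l then d else 0)"
  have sl: "s < wup L d m l 0" unfolding s_def using d1 dimh_pos[OF d1, of L "l - 1"] by (simp add: wup_def)
  have sm: "(\<Sum>k<wup L d m l 0. Wup (theta0 L d K) l 1 i k * y k) = (if i = 0 then y s else 0)" for i
    by (subst sum_single[of s]) (use sl in \<open>auto simp: theta0_def s_def\<close>)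
  have "mlp (wup L d m l) (Wup (theta0 L d K) l) (bup (theta0 L d K) l) 1 y
      = relu_layer (wup L d m l 1) (wup L d m l 0) (Wup (theta0 L d K) l 1) (bup (theta0 L d K) l 1) y"
    by simp
  also have "\<dots> = (\<lambda>i. if i = 0 then max 0 (y s) else 0)"
    unfolding relu_layer_def sm using wup_pos[of l 1] by (auto simp: theta0_def fun_eq_iff)
  finally have one: "mlp (wup L d m l) (Wup (theta0 L d K) l) (bup (theta0 L d K) l) 1 y = (\<lambda>i. if i = 0 then max 0 (y s) else 0)" .
  show ?thesis unfolding f_up_def s_def[symmetric]
    by (rule mlp_chain[OF _ _ one, of m]) (use m1 wup_pos in \<open>auto simp: theta0_def\<close>)
qed

end


lemma wf_adj_in: "wf_graph G \<Longrightarrow> adj_in G"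
  by (simp add: wf_graph_def adj_in_def)

lemma finite_nbhd_wf: "wf_graph G \<Longrightarrow> finite (nbhd G v)"
  by (rule finite_subset[of _ "insert v (verts G)"]) (auto simp: nbhd_def wf_graph_def)

lemma ef_nonneg_wf: "wf_graph G \<Longrightarrow> u \<in> nbhd G v \<Longrightarrow> ef G u v \<ge> 0"
  by (auto simp: nbhd_def ef_def wf_graph_def)

lemma Gamma_nonneg: "wf_graph G \<Longrightarrow> v \<in> verts G \<Longrightarrow> feat ((Gamma^^j) G) v \<ge> 0"
proof (induction j arbitrary: v)
  case 0 thus ?case by (simp add: wf_graph_def)
next
  case (Suc j)
  have "\<forall>x\<in>(\<lambda>u. feat ((Gamma^^j) G) u + ef G u v) ` nbhd G v. 0 \<le> x"
    using Suc.IH[OF Suc.prems(1)] nbhd_in_verts[OF wf_adj_in[OF Suc.prems(1)] Suc.prems(2)]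
      ef_nonneg_wf[OF Suc.prems(1)] by (auto intro!: add_nonneg_nonneg)
  thus ?case unfolding feat_Gamma_Suc using finite_nbhd_wf[OF Suc.prems(1), of v]
    by (subst Min_ge_iff) (auto simp: nbhd_def)
qed

context
  fixes L d m K :: nat
  assumes d1: "d \<ge> 1" and m1: "m \<ge> 1"
begin

lemma gnn_theta0:
  assumes wf: "wf_graph G"
  shows "v \<in> verts G \<Longrightarrow> gnn_h L d m (theta0 L d K) G l v = (\<lambda>i. if i = 0 then feat ((Gamma^^(min l K)) G) v else 0)"
proof (induction l arbitrary: v)
  case 0 thus ?case by (simp add: fun_eq_iff)
next
  case (Suc l)
  let ?h = "gnn_h L d m (theta0 L d K) G l"
  define p where "p = dimh L d l"
  have p1: "p \<ge> 1" unfolding p_def by (rule dimh_pos[OF d1])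
  have hu: "?h u = (\<lambda>i. if i = 0 then feat ((Gamma^^(min l K)) G) u else 0)" if "u \<in> nbhd G v" for u
    using Suc.IH nbhd_in_verts[OF wf_adj_in[OF wf] Suc.prems that] by blast
  have hv: "?h v = (\<lambda>i. if i = 0 then feat ((Gamma^^(min l K)) G) v else 0)" using Suc.IH Suc.prems by blast
  have up: "gnn_h L d m (theta0 L d K) G (Suc l) v =
      (\<lambda>i. if i = 0 then max 0 (vconcat d (AGG L d m (theta0 L d K) G l v) (?h v) (if K < Suc l then d else 0)) else 0)"
    unfolding gnn_h_Suc' by (rule up0[OF d1 m1]) simp
  show ?case
  proof (cases "Suc l \<le> K")
    case True
    have mins: "min (Suc l) K = Suc l" "min l K = l" using True by auto
    have fa: "f_agg L d m (theta0 L d K) (Suc l) (vconcat p (?h u) (\<lambda>k. if k = 0 then ef G u v else 0)) 0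
        = feat ((Gamma^^l) G) u + ef G u v" if u: "u \<in> nbhd G v" for u
    proof -
      have "feat ((Gamma^^l) G) u \<ge> 0"
        by (rule Gamma_nonneg[OF wf nbhd_in_verts[OF wf_adj_in[OF wf] Suc.prems u]])
      moreover have "ef G u v \<ge> 0" by (rule ef_nonneg_wf[OF wf u])
      ultimately show ?thesis
        using agg0_le[OF d1 m1 True] p1 hu[OF u] unfolding p_def
        by (simp add: vconcat_def mins)
    qed
    have "AGG L d m (theta0 L d K) G l v 0 = Min ((\<lambda>u. feat ((Gamma^^l) G) u + ef G u v) ` nbhd G v)"
      unfolding AGG_def p_def[symmetric] using fa by (intro arg_cong[where f=Min] image_cong) auto
    also have "\<dots> = feat ((Gamma^^Suc l) G) v" by (rule feat_Gamma_Suc[symmetric])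
    finally have A: "AGG L d m (theta0 L d K) G l v 0 = feat ((Gamma^^Suc l) G) v" .
    have "feat ((Gamma^^Suc l) G) v \<ge> 0" by (rule Gamma_nonneg[OF wf Suc.prems])
    thus ?thesis unfolding up using True A d1 by (simp add: vconcat_def mins fun_eq_iff)
  next
    case False
    have mins: "min (Suc l) K = K" "min l K = K" using False by auto
    have "feat ((Gamma^^K) G) v \<ge> 0" by (rule Gamma_nonneg[OF wf Suc.prems])
    thus ?thesis unfolding up using False hv by (simp add: vconcat_def mins fun_eq_iff)
  qed
qed

end


context
  fixes L d m K :: nat
  assumes d1: "d \<ge> 1" and m1: "m \<ge> 1"
begin

lemma nnz_up0: "j \<in> {1..m} \<Longrightarrow> nnz_mat (wup L d m l j) (wup L d m l (j - 1)) (Wup (theta0 L d K) l j) = 1"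
proof -
  assume j: "j \<in> {1..m}"
  define s where "s = (if j = 1 \<and> K < l then d else 0)"
  have sl: "s < wup L d m l (j - 1)" using d1 j unfolding s_def by (auto simp: wup_def dimh_def)
  have "{(i, k). i < wup L d m l j \<and> k < wup L d m l (j - 1) \<and> Wup (theta0 L d K) l j i k \<noteq> 0} = {(0, s)}"
    using sl wup_pos[OF d1 m1, where L=L and l=l and j=j] by (auto simp: theta0_def s_def)
  thus ?thesis unfolding nnz_mat_def by simp
qed

lemma nnz_agg0:
  assumes j: "j \<in> {1..m}"
  shows "nnz_mat (wagg L d l j) (wagg L d l (j - 1)) (Wagg (theta0 L d K) l j) = (if l \<le> K then (if j = 1 then 2 else 1) else 0)"
proof (cases "l \<le> K")
  case True
  show ?thesis
  proof (cases "j = 1")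
    case j1: True
    define p where "p = dimh L d (l - 1)"
    have p1: "p \<ge> 1" unfolding p_def by (rule dimh_pos[OF d1])
    have "{(i, k). i < wagg L d l j \<and> k < wagg L d l (j - 1) \<and> Wagg (theta0 L d K) l j i k \<noteq> 0} = {(0, 0), (0, p)}"
      using True j1 p1 d1 by (auto simp: theta0_def wagg_def p_def split: if_splits)
    thus ?thesis unfolding nnz_mat_def using True j1 p1 by simp
  next
    case j2: False
    have "{(i, k). i < wagg L d l j \<and> k < wagg L d l (j - 1) \<and> Wagg (theta0 L d K) l j i k \<noteq> 0} = {(0, 0)}"
      using True j2 j d1 by (auto simp: theta0_def wagg_def)
    thus ?thesis unfolding nnz_mat_def using True j2 by simp
  qed
next
  case False
  have e: "{(i, k). i < wagg L d l j \<and> k < wagg L d l (j - 1) \<and> Wagg (theta0 L d K) l j i k \<noteq> 0} = {}"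
    using False by (auto simp: theta0_def)
  show ?thesis unfolding nnz_mat_def e using False by simp
qed

lemma norm0_theta0:
  assumes KL: "K \<le> L"
  shows "norm0 L d m (theta0 L d K) = m*L + m*K + K"
proof -
  have up: "upc L d m (theta0 L d K) l = m" for l
  proof -
    have "upc L d m (theta0 L d K) l = (\<Sum>j\<in>{1..m}. 1)"
      unfolding upc_def using nnz_up0 by (intro sum.cong) (auto simp: nnz_vec_def theta0_def)
    thus ?thesis by simp
  qed
  have ag: "aggc L d m (theta0 L d K) l = (if l \<le> K then m + 1 else 0)" for l
  proof -
    have "aggc L d m (theta0 L d K) l = (\<Sum>j\<in>{1..m}. (if l \<le> K then (if j = 1 then 2 else 1) else 0))"
      unfolding aggc_def using nnz_agg0 by (intro sum.cong) (auto simp: nnz_vec_def theta0_def)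
    thus ?thesis using sum_if1[OF m1] by simp
  qed
  have "(\<Sum>l\<in>{1..L}. aggc L d m (theta0 L d K) l) = (\<Sum>l\<in>{l\<in>{1..L}. l \<le> K}. m + 1)"
    unfolding ag by (rule sum.inter_filter[symmetric]) simp
  also have "{l\<in>{1..L}. l \<le> K} = {1..K}" using KL by auto
  finally have A: "(\<Sum>l\<in>{1..L}. aggc L d m (theta0 L d K) l) = (m + 1) * K" by simp
  show ?thesis unfolding norm0_split A up by (simp add: algebra_simps)
qed

end


lemma loss_MAE_nonneg: "loss_MAE \<beta> T L d m \<theta> \<ge> 0"
  unfolding loss_MAE_def
  by (intro mult_nonneg_nonneg sum_nonneg) (auto simp: case_prod_beta)

lemma fail_loss:
  assumes finT: "finite T" and inT: "(G0, G0') \<in> T"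
    and fin: "finite (Vstar \<beta> G0 G0')"
    and a: "a \<in> Vstar \<beta> G0 G0'" and b: "b \<in> Vstar \<beta> G0 G0'" and ab: "a \<noteq> b"
    and fa: "feat G0' a = 0" and fb: "feat G0' b = 1"
    and eq: "gnn_out L d m \<theta> G0 a = gnn_out L d m \<theta> G0 b"
    and M: "Mtot \<beta> T > 0"
  shows "loss_MAE \<beta> T L d m \<theta> \<ge> 1 / real (Mtot \<beta> T)"
proof -
  define S where "S = (\<lambda>G G'. \<Sum>v\<in>Vstar \<beta> G G'. \<bar>feat G' v - gnn_out L d m \<theta> G v\<bar>)"
  let ?o = "gnn_out L d m \<theta> G0 a"
  have "(\<Sum>v\<in>{a, b}. \<bar>feat G0' v - gnn_out L d m \<theta> G0 v\<bar>) \<le> S G0 G0'"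
    unfolding S_def using a b fin by (intro sum_mono2) auto
  moreover have "(\<Sum>v\<in>{a, b}. \<bar>feat G0' v - gnn_out L d m \<theta> G0 v\<bar>) = \<bar>0 - ?o\<bar> + \<bar>1 - ?o\<bar>"
    using ab fa fb eq by simp
  moreover have "\<bar>0 - ?o\<bar> + \<bar>1 - ?o\<bar> \<ge> 1" by linarith
  ultimately have s1: "S G0 G0' \<ge> 1" by linarith
  have "(case (G0, G0') of (G, G') \<Rightarrow> S G G') \<le> (\<Sum>p\<in>T. case p of (G, G') \<Rightarrow> S G G')"
    by (rule member_le_sum[OF inT _ finT]) (auto simp: S_def case_prod_beta intro!: sum_nonneg)
  hence "1 \<le> (\<Sum>p\<in>T. case p of (G, G') \<Rightarrow> S G G')" using s1 by simp
  moreover have "loss_MAE \<beta> T L d m \<theta> = (1 / real (Mtot \<beta> T)) * (\<Sum>p\<in>T. case p of (G, G') \<Rightarrow> S G G')"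
    unfolding loss_MAE_def S_def by simp
  ultimately show ?thesis using M
    by (simp add: divide_simps)
qed

theorem mainTheorem10:
  fixes K L m d :: nat and \<beta> \<eta> \<epsilon> :: real and T :: "(wgraph \<times> wgraph) set"
  assumes "K \<ge> 1" and "L \<ge> K" and "m \<ge> 1" and "d \<ge> 1"
    and "\<beta> > 0"
    and beta_large: "\<forall>(G, G')\<in>T. \<forall>xs. is_walk G xs \<and> distinct xs \<longrightarrow> walk_wt G xs < \<beta>"
    and "train_set \<beta> K T"
    and "\<exists>(G, G')\<in>T. graph_iso G (H_graph K \<beta>)"
    and "\<exists>(G, G')\<in>T. graph_iso G (path_graph \<beta> 0 [1])"
    and "0 < \<eta>"
    and "\<eta> < 1 / (2 * real (Mtot \<beta> T) * real (m*L + m*K + K))"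
    and "0 \<le> \<epsilon>" and "\<epsilon> < \<eta>"
  shows "(\<exists>\<theta>. loss_reg \<eta> \<beta> T L d m \<theta> = \<eta> * real (m*L + m*K + K))
       \<and> (\<forall>\<theta>. loss_reg \<eta> \<beta> T L d m \<theta> \<ge> \<eta> * real (m*L + m*K + K))
       \<and> (\<forall>\<theta>. loss_reg \<eta> \<beta> T L d m \<theta> \<le> \<eta> * real (m*L + m*K + K) + \<epsilon> \<longrightarrow>
            norm0 L d m \<theta> = m*L + m*K + K
          \<and> card {l\<in>{1..L}. msg_passing L d m \<theta> l} = K
          \<and> (\<forall>l\<in>{1..L}. msg_passing L d m \<theta> l \<longrightarrow> edge_dep_msg_passing L d m \<theta> l)
          \<and> (\<forall>l\<in>{1..L}. \<not> constant_on_nonneg (wup L d m l 0) (f_up L d m \<theta> l))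
          \<and> (\<forall>l\<in>{1..L}. \<forall>j\<in>{1..m}.
                (\<forall>i<wup L d m l j. bup \<theta> l j i = 0) \<and> (\<forall>i<wagg L d l j. bagg \<theta> l j i = 0))
          \<and> (\<forall>l\<in>{1..L}. \<forall>j\<in>{1..m}. nnz_mat (wup L d m l j) (wup L d m l (j - 1)) (Wup \<theta> l j) = 1)
          \<and> (\<forall>l\<in>{1..L}. msg_passing L d m \<theta> l \<longrightarrow>
                nnz_mat (wagg L d l 1) (wagg L d l 0) (Wagg \<theta> l 1) = 2
              \<and> (\<exists>r. \<forall>i k. i < wagg L d l 1 \<and> k < wagg L d l 0 \<and> Wagg \<theta> l 1 i k \<noteq> 0 \<longrightarrow> i = r)
              \<and> (\<forall>j\<in>{2..m}. nnz_mat (wagg L d l j) (wagg L d l (j - 1)) (Wagg \<theta> l j) = 1)))"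
proof -
  note K1 = assms(1) and KL = assms(2) and m1 = assms(3) and d1 = assms(4) and bpos = assms(5)
  note TS = assms(7) and Hin = assms(8) and etapos = assms(10) and etab = assms(11)
  note epsnn = assms(12) and epslt = assms(13)
  define N where "N = m*L + m*K + K"
  define M where "M = Mtot \<beta> T"
  define HH where "HH = H_graph K \<beta>"
  have finT: "finite T" using TS by (simp add: train_set_def)
  have TG: "\<And>G G'. (G, G') \<in> T \<Longrightarrow> bf_instance \<beta> G \<and> G' = (Gamma ^^ K) G"
    using TS unfolding train_set_def by blast
  have wfT: "\<And>G G'. (G, G') \<in> T \<Longrightarrow> wf_graph G" using TG by (simp add: bf_instance_def)
  obtain G0 G0' where in0: "(G0, G0') \<in> T" and iso0: "graph_iso G0 HH"
    using Hin unfolding HH_def by blast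
  have wf0: "wf_graph G0" by (rule wfT[OF in0])
  have G0': "G0' = (Gamma ^^ K) G0" using TG[OF in0] by simp
  obtain f where f: "isof f G0 HH" using graph_iso_isof[OF iso0] by blast
  have bij: "bij_betw f (verts G0) (verts HH)" using f by (simp add: isof_def)
  have aiG: "adj_in G0" by (rule wf_adj_in[OF wf0])
  have aiH: "adj_in HH" unfolding HH_def by (rule adj_in_H)
  define g where "g = inv_into (verts G0) f"
  have g: "\<And>y. y \<le> 2*K+1 \<Longrightarrow> g y \<in> verts G0 \<and> f (g y) = y"
  proof -
    fix y :: nat assume "y \<le> 2*K+1"
    hence y: "y \<in> verts HH" by (simp add: HH_def H_simps)
    show "g y \<in> verts G0 \<and> f (g y) = y"
      unfolding g_def using bij_betw_inv_into_right[OF bij y] bij_betw_inv_into[OF bij] y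
      by (auto simp: bij_betw_def)
  qed
  define a where "a = g K"
  define b where "b = g (2*K+1)"
  have a: "a \<in> verts G0" "f a = K" using g[of K] unfolding a_def by auto
  have b: "b \<in> verts G0" "f b = 2*K+1" using g[of "2*K+1"] unfolding b_def by auto
  have ab: "a \<noteq> b" using a(2) b(2) by auto
  have b1: "\<beta> > 1"
  proof -
    define x where "x = g 0"
    define y where "y = g (K+2)"
    have x: "x \<in> verts G0" "f x = 0" using g[of 0] unfolding x_def by auto
    have y: "y \<in> verts G0" "f y = K+2" using g[of "K+2"] K1 unfolding y_def by auto
    have "adj HH (f x) (f y)" using x y K1 by (simp add: HH_def H_simps H_idx_def)
    hence adj: "adj G0 x y" using f x y by (simp add: isof_def)
    have wt: "wt G0 x y = 1" using f x y adj K1 by (simp add: isof_def HH_def H_simps)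
    have xy: "x \<noteq> y" using x y by auto
    have "is_walk G0 [x, y]" using x y adj by (auto simp: is_walk_def less_Suc_eq)
    moreover have "distinct [x, y]" using xy by simp
    moreover have "walk_wt G0 [x, y] = 1" using wt by (simp add: walk_wt_def)
    ultimately show ?thesis using assms(6) in0 by fastforce
  qed
  have GH: "\<And>v. v \<in> verts G0 \<Longrightarrow> feat G0' v = feat ((Gamma^^K) HH) (f v)"
    unfolding G0' by (rule Gamma_iso[OF f aiG aiH])
  have gam: "\<forall>a \<le> 2*K+1. (a \<le> K \<longrightarrow> 0 \<le> feat ((Gamma^^K) HH) a \<and> (a \<le> K \<longrightarrow> feat ((Gamma^^K) HH) a = 0))
     \<and> (K < a \<longrightarrow> 1 \<le> feat ((Gamma^^K) HH) a \<and> (1 \<le> H_idx K a \<and> H_idx K a \<le> K \<longrightarrow> feat ((Gamma^^K) HH) a = 1))"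
    unfolding HH_def by (rule Gamma_H) (use b1 in simp)
  have ta: "feat G0' a = 0" using GH[OF a(1)] a(2) gam by simp
  have tb: "feat G0' b = 1"
  proof -
    have "H_idx K (2*K+1) = K" by (simp add: H_idx_def)
    thus ?thesis using GH[OF b(1)] b(2) gam K1 by simp
  qed
  have finV: "finite (Vstar \<beta> G G')" if p: "(G, G') \<in> T" for G G'
  proof (rule finite_subset[of _ "verts G"])
    show "Vstar \<beta> G G' \<subseteq> verts G" by (auto simp: Vstar_def)
    show "finite (verts G)" using wfT[OF p] by (simp add: wf_graph_def)
  qed
  have aV: "a \<in> Vstar \<beta> G0 G0'" using a(1) ta bpos by (simp add: Vstar_def)
  have bV: "b \<in> Vstar \<beta> G0 G0'" using b(1) tb b1 by (simp add: Vstar_def)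
  have Mpos: "M > 0"
  proof -
    have "card (Vstar \<beta> G0 G0') > 0" using aV finV[OF in0] card_gt_0_iff by blast
    moreover have "card (Vstar \<beta> G0 G0') \<le> M"
      unfolding M_def Mtot_def
      using member_le_sum[OF in0, of "\<lambda>p. case p of (G, G') \<Rightarrow> card (Vstar \<beta> G G')"] finT by simp
    ultimately show ?thesis by simp
  qed
  have Npos: "N \<ge> 1" unfolding N_def using K1 by simp
  have etaN: "\<eta> * real N < 1 / (2 * real M)"
  proof -
    have "\<eta> * (2 * real M * real N) < 1"
      using etab Mpos Npos unfolding N_def[symmetric] M_def[symmetric] by (simp add: field_simps)
    thus ?thesis using Mpos by (simp add: field_simps)
  qed
  have gap: "\<eta> * real N + \<epsilon> < 1 / real M"
  proof -
    have "\<eta> * real N + \<epsilon> < \<eta> * real N + \<eta>" using epslt by simp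
    also have "\<dots> \<le> 2 * (\<eta> * real N)" using Npos etapos by (simp add: field_simps)
    also have "\<dots> < 1 / real M" using etaN Mpos by (simp add: field_simps)
    finally show ?thesis .
  qed
  define E where "E = (\<lambda>\<theta>. {l\<in>{1..L}. ej L d m \<theta> l})"
  have fail: "loss_MAE \<beta> T L d m \<theta> \<ge> 1 / real M"
    if fc: "(\<exists>l\<in>{1..L}. constant_on_nonneg (wup L d m l 0) (f_up L d m \<theta> l)) \<or> card (E \<theta>) < K" for \<theta>
  proof -
    have "gnn_out L d m \<theta> HH (2*K+1) = gnn_out L d m \<theta> HH K"
      unfolding HH_def by (rule H_fail[OF m1 bpos]) (use fc in \<open>simp add: E_def\<close>)
    moreover have "gnn_out L d m \<theta> G0 a = gnn_out L d m \<theta> HH K"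
      using gnn_iso[OF f aiG aiH a(1)] a(2) by (simp add: gnn_out_def)
    moreover have "gnn_out L d m \<theta> G0 b = gnn_out L d m \<theta> HH (2*K+1)"
      using gnn_iso[OF f aiG aiH b(1)] b(2) by (simp add: gnn_out_def)
    ultimately have "gnn_out L d m \<theta> G0 a = gnn_out L d m \<theta> G0 b" by simp
    thus ?thesis unfolding M_def
      by (rule fail_loss[OF finT in0 finV[OF in0] aV bV ab ta tb]) (use Mpos in \<open>simp add: M_def\<close>)
  qed
  have lr: "loss_reg \<eta> \<beta> T L d m \<theta> = loss_MAE \<beta> T L d m \<theta> + \<eta> * real (norm0 L d m \<theta>)" for \<theta>
    by (simp add: loss_reg_def)
  have P1: "loss_reg \<eta> \<beta> T L d m (theta0 L d K) = \<eta> * real N"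
  proof -
    have "loss_MAE \<beta> T L d m (theta0 L d K) = 0"
    proof -
      have "(\<Sum>v\<in>Vstar \<beta> G G'. \<bar>feat G' v - gnn_out L d m (theta0 L d K) G v\<bar>) = 0" if p: "(G, G') \<in> T" for G G'
      proof (intro sum.neutral ballI)
        fix v assume v: "v \<in> Vstar \<beta> G G'"
        have vv: "v \<in> verts G" using v by (simp add: Vstar_def)
        have "gnn_out L d m (theta0 L d K) G v = feat ((Gamma^^(min L K)) G) v"
          using gnn_theta0[OF d1 m1 wfT[OF p] vv, of L K L] by (simp add: gnn_out_def)
        moreover have "min L K = K" using KL by simp
        ultimately show "\<bar>feat G' v - gnn_out L d m (theta0 L d K) G v\<bar> = 0" using TG[OF p] by simp
      qed
      hence "(\<Sum>(G, G')\<in>T. \<Sum>v\<in>Vstar \<beta> G G'. \<bar>feat G' v - gnn_out L d m (theta0 L d K) G v\<bar>) = 0"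
        by (intro sum.neutral) auto
      thus ?thesis unfolding loss_MAE_def by simp
    qed
    moreover have "norm0 L d m (theta0 L d K) = N" unfolding N_def by (rule norm0_theta0[OF d1 m1 KL])
    ultimately show ?thesis by (simp add: lr)
  qed
  have P2: "loss_reg \<eta> \<beta> T L d m \<theta> \<ge> \<eta> * real N" for \<theta>
  proof (cases "(\<exists>l\<in>{1..L}. constant_on_nonneg (wup L d m l 0) (f_up L d m \<theta> l)) \<or> card (E \<theta>) < K")
    case True
    have "loss_reg \<eta> \<beta> T L d m \<theta> \<ge> 1 / real M" using fail[OF True] mult_nonneg_nonneg[of \<eta> "real (norm0 L d m \<theta>)"] etapos unfolding lr by linarith
    moreover have "1 / real M \<ge> \<eta> * real N" using etaN Mpos by (simp add: field_simps)
    ultimately show ?thesis by linarith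
  next
    case False
    hence "norm0 L d m \<theta> \<ge> N" unfolding N_def E_def
      by (intro count_main(1)[OF m1]) auto
    hence "\<eta> * real N \<le> \<eta> * real (norm0 L d m \<theta>)" using etapos by simp
    thus ?thesis using loss_MAE_nonneg[of \<beta> T L d m \<theta>] by (simp add: lr)
  qed
  have P3: "norm0 L d m \<theta> = N
          \<and> card {l\<in>{1..L}. msg_passing L d m \<theta> l} = K
          \<and> (\<forall>l\<in>{1..L}. msg_passing L d m \<theta> l \<longrightarrow> edge_dep_msg_passing L d m \<theta> l)
          \<and> (\<forall>l\<in>{1..L}. \<not> constant_on_nonneg (wup L d m l 0) (f_up L d m \<theta> l))
          \<and> (\<forall>l\<in>{1..L}. \<forall>j\<in>{1..m}.
                (\<forall>i<wup L d m l j. bup \<theta> l j i = 0) \<and> (\<forall>i<wagg L d l j. bagg \<theta> l j i = 0))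
          \<and> (\<forall>l\<in>{1..L}. \<forall>j\<in>{1..m}. nnz_mat (wup L d m l j) (wup L d m l (j - 1)) (Wup \<theta> l j) = 1)
          \<and> (\<forall>l\<in>{1..L}. msg_passing L d m \<theta> l \<longrightarrow>
                nnz_mat (wagg L d l 1) (wagg L d l 0) (Wagg \<theta> l 1) = 2
              \<and> (\<exists>r. \<forall>i k. i < wagg L d l 1 \<and> k < wagg L d l 0 \<and> Wagg \<theta> l 1 i k \<noteq> 0 \<longrightarrow> i = r)
              \<and> (\<forall>j\<in>{2..m}. nnz_mat (wagg L d l j) (wagg L d l (j - 1)) (Wagg \<theta> l j) = 1))"
    if le: "loss_reg \<eta> \<beta> T L d m \<theta> \<le> \<eta> * real N + \<epsilon>" for \<theta>
  proof -
    have nf: "\<not> ((\<exists>l\<in>{1..L}. constant_on_nonneg (wup L d m l 0) (f_up L d m \<theta> l)) \<or> card (E \<theta>) < K)"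
    proof
      assume fc: "(\<exists>l\<in>{1..L}. constant_on_nonneg (wup L d m l 0) (f_up L d m \<theta> l)) \<or> card (E \<theta>) < K"
      have "loss_reg \<eta> \<beta> T L d m \<theta> \<ge> 1 / real M" using fail[OF fc] mult_nonneg_nonneg[of \<eta> "real (norm0 L d m \<theta>)"] etapos unfolding lr by linarith
      thus False using le gap by linarith
    qed
    have nc: "\<forall>l\<in>{1..L}. \<not> constant_on_nonneg (wup L d m l 0) (f_up L d m \<theta> l)" using nf by blast
    have cE: "K \<le> card (E \<theta>)" using nf by simp
    have ge: "norm0 L d m \<theta> \<ge> N" unfolding N_def
      using count_main(1)[OF m1 nc] cE by (simp add: E_def)
    have "\<eta> * real (norm0 L d m \<theta>) \<le> \<eta> * real N + \<epsilon>"
      using le loss_MAE_nonneg[of \<beta> T L d m \<theta>] by (simp add: lr)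
    hence "\<eta> * real (norm0 L d m \<theta>) < \<eta> * (real N + 1)" using epslt by (simp add: algebra_simps)
    hence "real (norm0 L d m \<theta>) < real N + 1" using etapos by simp
    hence n0: "norm0 L d m \<theta> = N" using ge by linarith
    have CM: "card (E \<theta>) = K \<and> (\<forall>l\<in>{1..L}. upc L d m \<theta> l = m)
          \<and> (\<forall>l\<in>E \<theta>. aggc L d m \<theta> l = m + 1) \<and> (\<forall>l\<in>{1..L} - E \<theta>. aggc L d m \<theta> l = 0)"
      using count_main(2)[OF m1 nc, of K] cE n0 unfolding N_def E_def by blast
    have inE: "l \<in> E \<theta>" if l: "l \<in> {1..L}" and mp: "msg_passing L d m \<theta> l" for l
    proof (rule ccontr)
      assume "l \<notin> E \<theta>"
      hence "aggc L d m \<theta> l = 0" using CM l by blast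
      hence "nnz_mat (wagg L d l 1) (wagg L d l (1 - 1)) (Wagg \<theta> l 1) = 0"
        using aggc_zero[where L=L and d=d and m=m and \<theta>=\<theta> and l=l and j=1] m1 by simp
      hence "\<not> msg_passing L d m \<theta> l" using zero_not_mp[OF m1] by simp
      thus False using mp by simp
    qed
    have Ejoint: "\<exists>c. jointc L d m \<theta> l c" if "l \<in> E \<theta>" for l
      using ej_joint that unfolding E_def by blast
    have mpE: "{l\<in>{1..L}. msg_passing L d m \<theta> l} = E \<theta>"
    proof
      show "{l\<in>{1..L}. msg_passing L d m \<theta> l} \<subseteq> E \<theta>" using inE by blast
      show "E \<theta> \<subseteq> {l\<in>{1..L}. msg_passing L d m \<theta> l}"
        using Ejoint joint_mp(1) unfolding E_def by blast
    qed
    have edge: "\<forall>l\<in>{1..L}. msg_passing L d m \<theta> l \<longrightarrow> edge_dep_msg_passing L d m \<theta> l"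
      using inE Ejoint joint_mp(2) by blast
    have bias: "\<forall>l\<in>{1..L}. \<forall>j\<in>{1..m}.
                (\<forall>i<wup L d m l j. bup \<theta> l j i = 0) \<and> (\<forall>i<wagg L d l j. bagg \<theta> l j i = 0)"
    proof (intro ballI conjI allI impI)
      fix l j i assume l: "l \<in> {1..L}" and j: "j \<in> {1..m}" and i: "i < wup L d m l j"
      have "nnz_vec (wup L d m l j) (bup \<theta> l j) = 0"
        using upc_tight[where L=L and d=d and m=m and \<theta>=\<theta> and l=l and j=j] nc l j CM by blast
      thus "bup \<theta> l j i = 0" using nnz_vec_0 i by blast
    next
      fix l j i assume l: "l \<in> {1..L}" and j: "j \<in> {1..m}" and i: "i < wagg L d l j"
      have "nnz_vec (wagg L d l j) (bagg \<theta> l j) = 0"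
      proof (cases "l \<in> E \<theta>")
        case True
        hence "ej L d m \<theta> l" by (simp add: E_def)
        thus ?thesis using aggc_tight[OF m1 _ _ j] CM True by blast
      next
        case False
        have z: "aggc L d m \<theta> l = 0" using CM l False by auto
        show ?thesis using aggc_zero[OF z j] by simp
      qed
      thus "bagg \<theta> l j i = 0" using nnz_vec_0 i by blast
    qed
    have wup1: "\<forall>l\<in>{1..L}. \<forall>j\<in>{1..m}. nnz_mat (wup L d m l j) (wup L d m l (j - 1)) (Wup \<theta> l j) = 1"
      using upc_tight nc CM by blast
    have aggs: "\<forall>l\<in>{1..L}. msg_passing L d m \<theta> l \<longrightarrow>
                nnz_mat (wagg L d l 1) (wagg L d l 0) (Wagg \<theta> l 1) = 2
              \<and> (\<exists>r. \<forall>i k. i < wagg L d l 1 \<and> k < wagg L d l 0 \<and> Wagg \<theta> l 1 i k \<noteq> 0 \<longrightarrow> i = r)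
              \<and> (\<forall>j\<in>{2..m}. nnz_mat (wagg L d l j) (wagg L d l (j - 1)) (Wagg \<theta> l j) = 1)"
    proof (intro ballI impI)
      fix l assume l: "l \<in> {1..L}" and mp: "msg_passing L d m \<theta> l"
      have lE: "l \<in> E \<theta>" by (rule inE[OF l mp])
      hence ejl: "ej L d m \<theta> l" by (simp add: E_def)
      have ag: "aggc L d m \<theta> l = m + 1" using CM lE by blast
      have w1: "nnz_mat (wagg L d l 1) (wagg L d l 0) (Wagg \<theta> l 1) = 2"
        using aggc_tight[OF m1 ejl ag, of 1] m1 by simp
      have wj: "\<forall>j\<in>{2..m}. nnz_mat (wagg L d l j) (wagg L d l (j - 1)) (Wagg \<theta> l j) = 1"
      proof
        fix j assume "j \<in> {2..m}"
        hence j: "j \<in> {1..m}" "j \<noteq> 1" by auto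
        show "nnz_mat (wagg L d l j) (wagg L d l (j - 1)) (Wagg \<theta> l j) = 1"
          using aggc_tight[OF m1 ejl ag j(1)] j(2) by simp
      qed
      obtain c where c: "jointc L d m \<theta> l c" using Ejoint[OF lE] by blast
      show "nnz_mat (wagg L d l 1) (wagg L d l 0) (Wagg \<theta> l 1) = 2
              \<and> (\<exists>r. \<forall>i k. i < wagg L d l 1 \<and> k < wagg L d l 0 \<and> Wagg \<theta> l 1 i k \<noteq> 0 \<longrightarrow> i = r)
              \<and> (\<forall>j\<in>{2..m}. nnz_mat (wagg L d l j) (wagg L d l (j - 1)) (Wagg \<theta> l j) = 1)"
        using w1 wj joint_row[OF m1 c w1 wj] by blast
    qed
    show ?thesis using n0 mpE CM edge nc bias wup1 aggs by simp
  qed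
  show ?thesis
    using P1 P2 P3 unfolding N_def by blast
qed

end
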